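(* Let $(\mu^{(0)},(\mu^{(1)},r^{(1)}),\dots,(\mu^{(n)},r^{(n)}))$ be a rigged configuration for $A^{(1)}_n$ with $\mu^{(0)}=(\mu^{(0)}_1,\dots,\mu^{(0)}_L)$, let $\tau_{k,d}$ be its tau functions, and let $\bar\tau_{k,d}$ be defined exactly as $\tau_{k,d}$ but with $|s^{(1)}|$ replaced by $|s^{(1)}|+|\nu^{(1)}|$ in the defining maximum (equivalently, the tau functions of the data with each rigging $r^{(1)}_i$ replaced by $r^{(1)}_i+\mu^{(1)}_i$). Then for all $1\le k\le L$ and $2\le d\le n+1$, $$\tau_{k-1,d}+\bar\tau_{k,d-1}=\max\big(\bar\tau_{k,d}+\tau_{k-1,d-1},\ \tau_{k,d}+\bar\tau_{k-1,d-1}-\mu^{(0)}_k\big).$$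
   Context: Notation: for finite multisets (or sequences) of positive integers $\lambda=(\lambda_1,\dots,\lambda_k)$, $\mu=(\mu_1,\dots,\mu_m)$ write $|\lambda|=\sum_i\lambda_i$, $\lambda_{[N]}=(\lambda_1,\dots,\lambda_N)$ ($\lambda_{[0]}=\emptyset$), $\min(\lambda,\mu)=\sum_{i=1}^k\sum_{j=1}^m\min(\lambda_i,\mu_j)$, and $\lambda\subseteq\mu$ means inclusion of multisets (with multiplicity). Rigged configuration: data $(\mu^{(0)},(\mu^{(1)},r^{(1)}),\dots,(\mu^{(n)},r^{(n)}))$ where $\mu^{(0)}=(\mu^{(0)}_1,\dots,\mu^{(0)}_L)$ is a sequence of positive integers and, for $1\le a\le n$, $(\mu^{(a)},r^{(a)})$ is a finite multiset of pairs $(\mu^{(a)}_i,r^{(a)}_i)$ (row length $\mu^{(a)}_i\in\mathbb Z_{\ge1}$, rigging $r^{(a)}_i\in\mathbb Z$) such that $0\le r^{(a)}_i\le p^{(a)}_{\mu^{(a)}_i}$, where the vacancy numbers are $p^{(a)}_j=E^{(a-1)}_j-2E^{(a)}_j+E^{(a+1)}_j$ with $E^{(a)}_j=\sum_k\min(j,\mu^{(a)}_k)$ for $0\le a\le n$ and $E^{(n+1)}_j=0$. Tau functions: for $\lambda\subseteq\mu^{(0)}$ and $1\le d\le n+1$, $$\tau_d(\lambda)=\max\Big\{\min(\lambda,\nu^{(1)})+\sum_{a=1}^{n-1}\min(\nu^{(a)},\nu^{(a+1)})-\sum_{a=1}^{n}\min(\nu^{(a)},\nu^{(a)})-\sum_{a=1}^n|s^{(a)}|-|\nu^{(d)}|\Big\},$$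 the maximum being over all independent choices, for each $1\le a\le n$, of a sub-multiset of pairs $\{(\nu^{(a)}_i,s^{(a)}_i)\}\subseteq\{(\mu^{(a)}_i,r^{(a)}_i)\}$ (with $\nu^{(a)}$ the chosen lengths and $s^{(a)}$ the chosen riggings), and with the convention $|\nu^{(n+1)}|=0$; also $\tau_0(\lambda)=\tau_{n+1}(\lambda)-|\lambda|$. Set $\tau_{k,d}=\tau_d(\mu^{(0)}_{[k]})$ for $0\le k\le L$, $0\le d\le n+1$. *)

theory Defs
  imports Main "HOL-Library.Multiset"
begin

text \<open>A rigged configuration for A_n^(1): mu0 is the list (mu0_1,...,mu0_L);
  cfg a (for 1 <= a <= n) is the multiset of pairs (row length, rigging).
  Values of cfg outside 1..n are irrelevant.\<close>

definition minm :: "nat multiset \<Rightarrow> nat multiset \<Rightarrow> int" where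
  "minm lam mu = (\<Sum>x\<in>#lam. \<Sum>y\<in>#mu. int (min x y))"

definition Efun :: "nat \<Rightarrow> nat list \<Rightarrow> (nat \<Rightarrow> (nat \<times> int) multiset) \<Rightarrow> nat \<Rightarrow> nat \<Rightarrow> int" where
  "Efun n mu0 cfg a j =
     (if a = 0 then (\<Sum>x\<leftarrow>mu0. int (min j x))
      else if a \<le> n then (\<Sum>p\<in>#cfg a. int (min j (fst p)))
      else 0)"

definition vacancy :: "nat \<Rightarrow> nat list \<Rightarrow> (nat \<Rightarrow> (nat \<times> int) multiset) \<Rightarrow> nat \<Rightarrow> nat \<Rightarrow> int" where
  "vacancy n mu0 cfg a j =
     Efun n mu0 cfg (a - 1) j - 2 * Efun n mu0 cfg a j + Efun n mu0 cfg (a + 1) j"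

definition rigged_config :: "nat \<Rightarrow> nat list \<Rightarrow> (nat \<Rightarrow> (nat \<times> int) multiset) \<Rightarrow> bool" where
  "rigged_config n mu0 cfg \<longleftrightarrow>
     (\<forall>x\<in>set mu0. 0 < x) \<and>
     (\<forall>a\<in>{1..n}. \<forall>p\<in>#cfg a. 0 < fst p \<and> 0 \<le> snd p \<and> snd p \<le> vacancy n mu0 cfg a (fst p))"

definition choices :: "nat \<Rightarrow> (nat \<Rightarrow> (nat \<times> int) multiset) \<Rightarrow> (nat \<Rightarrow> (nat \<times> int) multiset) set" where
  "choices n cfg = {S. (\<forall>a\<in>{1..n}. S a \<subseteq># cfg a) \<and> (\<forall>a. a \<notin> {1..n} \<longrightarrow> S a = {#})}"

definition tau_obj :: "nat \<Rightarrow> nat multiset \<Rightarrow> (nat \<Rightarrow> (nat \<times> int) multiset) \<Rightarrow> nat \<Rightarrow> int" where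
  "tau_obj n lam S d =
     (let nu = (\<lambda>a. image_mset fst (S a)); s = (\<lambda>a. image_mset snd (S a)) in
      minm lam (nu 1)
      + (\<Sum>a=1..<n. minm (nu a) (nu (a + 1)))
      - (\<Sum>a=1..n. minm (nu a) (nu a))
      - (\<Sum>a=1..n. sum_mset (s a))
      - (if 1 \<le> d \<and> d \<le> n then int (sum_mset (nu d)) else 0))"

definition tau :: "nat \<Rightarrow> (nat \<Rightarrow> (nat \<times> int) multiset) \<Rightarrow> nat multiset \<Rightarrow> nat \<Rightarrow> int" where
  "tau n cfg lam d =
     (if d = 0 then Max ((\<lambda>S. tau_obj n lam S (n + 1)) ` choices n cfg) - int (sum_mset lam)
      else Max ((\<lambda>S. tau_obj n lam S d) ` choices n cfg))"

definition tauk :: "nat \<Rightarrow> nat list \<Rightarrow> (nat \<Rightarrow> (nat \<times> int) multiset) \<Rightarrow> nat \<Rightarrow> nat \<Rightarrow> int" where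
  "tauk n mu0 cfg k d = tau n cfg (mset (take k mu0)) d"

definition bar_cfg :: "(nat \<Rightarrow> (nat \<times> int) multiset) \<Rightarrow> nat \<Rightarrow> (nat \<times> int) multiset" where
  "bar_cfg cfg a = (if a = 1 then image_mset (\<lambda>(m, r). (m, r + int m)) (cfg 1) else cfg a)"

end

theory Submission
  imports Defs "HOL-Analysis.Fashoda_Theorem" "HOL-Library.FuncSet"
begin

definition cnt :: "(nat \<times> int) multiset \<Rightarrow> nat \<Rightarrow> int" where
  "cnt M j = int (size (filter_mset (\<lambda>p. j \<le> fst p) M))"

definition cntn :: "nat multiset \<Rightarrow> nat \<Rightarrow> int" where
  "cntn M j = int (size (filter_mset (\<lambda>x. j \<le> x) M))"

lemma cnt_empty[simp]: "cnt {#} j = 0"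
  by (simp add: cnt_def)

lemma cnt_add[simp]: "cnt (M + N) j = cnt M j + cnt N j"
  by (simp add: cnt_def)

lemma cnt_as_sum: "cnt M j = (\<Sum>p\<in>#M. (if j \<le> fst p then 1 else 0 :: int))"
  by (induction M) (auto simp: cnt_def)

lemma cntn_as_sum: "cntn M j = (\<Sum>x\<in>#M. (if j \<le> x then 1 else 0 :: int))"
  by (induction M) (auto simp: cntn_def)

lemma sum_mset_sum_swap:
  "(\<Sum>p\<in>#M. \<Sum>j\<in>A. f p j) = (\<Sum>j\<in>A. \<Sum>p\<in>#M. f p j)"
  by (induction M) (auto simp: sum.distrib)

lemma sum_mset_mult_left: "(\<Sum>p\<in>#M. c * f p) = (c::int) * (\<Sum>p\<in>#M. f p)"
  by (induction M) (auto simp: algebra_simps)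

lemma sum_mset_mult_right: "(\<Sum>p\<in>#M. f p * c) = (\<Sum>p\<in>#M. f p) * (c::int)"
  by (induction M) (auto simp: algebra_simps)

lemma sum_mset_cong':
  "(\<And>x. x \<in># M \<Longrightarrow> f x = g x) \<Longrightarrow> (\<Sum>x\<in>#M. f x) = (\<Sum>x\<in>#M. g x)"
  by (metis image_mset_cong)

lemma ind_sum:
  assumes "m \<le> J"
  shows "(\<Sum>j=1..J. (if j \<le> m then 1 else 0 :: int)) = int m"
proof -
  have "(\<Sum>j=1..J. (if j \<le> m then 1 else 0 :: int)) = (\<Sum>j=1..m. (if j \<le> m then 1 else 0 :: int))"
    using assms by (intro sum.mono_neutral_right) auto
  also have "\<dots> = (\<Sum>j=1..m. 1)" by (rule sum.cong) auto
  finally show ?thesis by simp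
qed

lemma min_as_sum:
  assumes "y \<le> J"
  shows "int (min x y) = (\<Sum>j=1..J. (if j \<le> x then 1 else 0) * (if j \<le> y then 1 else 0 :: int))"
proof -
  have "(\<Sum>j=1..J. (if j \<le> x then 1 else 0) * (if j \<le> y then 1 else 0 :: int))
      = (\<Sum>j=1..J. (if j \<le> min x y then 1 else 0))"
    by (rule sum.cong) auto
  then show ?thesis using ind_sum[of "min x y" J] assms by simp
qed

lemma nat_as_sum:
  assumes "y \<le> J"
  shows "int y = (\<Sum>j=1..J. (if j \<le> y then 1 else 0 :: int))"
proof -
  show ?thesis using ind_sum[OF assms] by simp
qed

lemma minm_cnt:
  assumes "\<forall>p\<in>#M. fst p \<le> J" "\<forall>q\<in>#N. fst q \<le> J"
  shows "minm (image_mset fst M) (image_mset fst N) = (\<Sum>j=1..J. cnt M j * cnt N j)"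
proof -
  have "minm (image_mset fst M) (image_mset fst N)
     = (\<Sum>p\<in>#M. \<Sum>q\<in>#N. int (min (fst p) (fst q)))"
    by (simp add: minm_def image_mset.compositionality o_def)
  also have "\<dots> = (\<Sum>p\<in>#M. \<Sum>q\<in>#N. \<Sum>j=1..J. (if j \<le> fst p then 1 else 0) * (if j \<le> fst q then 1 else 0 :: int))"
    using assms by (intro sum_mset_cong' min_as_sum) auto
  also have "\<dots> = (\<Sum>j=1..J. \<Sum>p\<in>#M. \<Sum>q\<in>#N. (if j \<le> fst p then 1 else 0) * (if j \<le> fst q then 1 else 0 :: int))"
    by (simp add: sum_mset_sum_swap)
  also have "\<dots> = (\<Sum>j=1..J. cnt M j * cnt N j)"
    by (simp add: cnt_as_sum sum_mset_mult_left sum_mset_mult_right)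
  finally show ?thesis .
qed

lemma minm_cntn:
  assumes "\<forall>q\<in>#N. fst q \<le> J"
  shows "minm lam (image_mset fst N) = (\<Sum>j=1..J. cntn lam j * cnt N j)"
proof -
  have "minm lam (image_mset fst N)
     = (\<Sum>x\<in>#lam. \<Sum>q\<in>#N. int (min x (fst q)))"
    by (simp add: minm_def image_mset.compositionality o_def)
  also have "\<dots> = (\<Sum>x\<in>#lam. \<Sum>q\<in>#N. \<Sum>j=1..J. (if j \<le> x then 1 else 0) * (if j \<le> fst q then 1 else 0 :: int))"
    using assms by (intro sum_mset_cong' min_as_sum) auto
  also have "\<dots> = (\<Sum>j=1..J. \<Sum>x\<in>#lam. \<Sum>q\<in>#N. (if j \<le> x then 1 else 0) * (if j \<le> fst q then 1 else 0 :: int))"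
    by (simp add: sum_mset_sum_swap)
  also have "\<dots> = (\<Sum>j=1..J. cntn lam j * cnt N j)"
    by (simp add: cnt_as_sum cntn_as_sum sum_mset_mult_left sum_mset_mult_right)
  finally show ?thesis .
qed

lemma len_cnt:
  assumes "\<forall>p\<in>#M. fst p \<le> J"
  shows "int (sum_mset (image_mset fst M)) = (\<Sum>j=1..J. cnt M j)"
proof -
  have "int (sum_mset (image_mset fst M)) = (\<Sum>p\<in>#M. int (fst p))"
    by (induction M) auto
  also have "\<dots> = (\<Sum>p\<in>#M. \<Sum>j=1..J. (if j \<le> fst p then 1 else 0 :: int))"
    using assms by (intro sum_mset_cong' nat_as_sum) auto
  also have "\<dots> = (\<Sum>j=1..J. cnt M j)"
    by (simp add: sum_mset_sum_swap cnt_as_sum)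
  finally show ?thesis .
qed

lemma G_cnt:
  assumes "\<forall>p\<in>#M. fst p \<le> J"
  shows "(\<Sum>p\<in>#M. int (min l (fst p))) = (\<Sum>j=1..J. (if j \<le> l then 1 else 0) * cnt M j)"
proof -
  have "(\<Sum>p\<in>#M. int (min l (fst p))) = (\<Sum>p\<in>#M. \<Sum>j=1..J. (if j \<le> l then 1 else 0) * (if j \<le> fst p then 1 else 0 :: int))"
    using assms by (intro sum_mset_cong' min_as_sum) auto
  also have "\<dots> = (\<Sum>j=1..J. (if j \<le> l then 1 else 0) * cnt M j)"
    by (simp add: sum_mset_sum_swap cnt_as_sum sum_mset_mult_left)
  finally show ?thesis .
qed

lemma sq_diff_sum_gen:
  fixes e :: "nat \<Rightarrow> int"
  shows "(\<Sum>a=0..n. (e a - e (a+1))^2) = (e 0)^2 + (e (n+1))^2 + 2*(\<Sum>a=1..n. (e a)^2) - 2*(\<Sum>a=0..n. e a * e (a+1))"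
proof (induction n)
  case 0
  then show ?case by (simp add: power2_eq_square algebra_simps)
next
  case (Suc n)
  then show ?case by (simp add: power2_eq_square algebra_simps)
qed

lemma sq_diff_sum:
  fixes e :: "nat \<Rightarrow> int"
  assumes "e 0 = 0" "e (n+1) = 0"
  shows "(\<Sum>a=0..n. (e a - e (a+1))^2) = 2*(\<Sum>a=1..n. (e a)^2) - 2*(\<Sum>a=1..<n. e a * e (a+1))"
proof -
  have "(\<Sum>a=0..n. e a * e (a+1)) = e 0 * e 1 + (\<Sum>a=1..n. e a * e (a+1))"
    by (simp add: sum.atLeast_Suc_atMost)
  also have "(\<Sum>a=1..n. e a * e (a+1)) = (\<Sum>a=1..<n. e a * e (a+1))"
  proof (cases n)
    case 0 then show ?thesis by simp
  next
    case (Suc m)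
    then have "{1..n} = insert n {1..<n}" by auto
    then show ?thesis using assms by simp
  qed
  finally show ?thesis using sq_diff_sum_gen[of e n] assms by simp
qed

definition hh :: "nat \<Rightarrow> nat \<Rightarrow> int \<Rightarrow> nat \<Rightarrow> int" where
  "hh n d c a = (if a = 0 then c else if a \<le> n then (if d \<le> a then 1 else 0) else 1)"

lemma hh_diff:
  assumes "1 \<le> a" "a \<le> n" "d \<le> n + 1"
  shows "hh n d c a - hh n d c (a+1) = (if a + 1 = d then -1 else 0)"
  using assms by (auto simp: hh_def)

lemma hh_sq:
  assumes "1 \<le> n" "2 \<le> d" "d \<le> n+1"
  shows "(\<Sum>a=0..n. (hh n d c a - hh n d c (a+1))^2) = c^2 + 1"
proof -
  have "(\<Sum>a=0..n. (hh n d c a - hh n d c (a+1))^2) = (hh n d c 0 - hh n d c 1)^2 + (\<Sum>a=1..n. (hh n d c a - hh n d c (a+1))^2)"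
    by (simp add: sum.atLeast_Suc_atMost)
  also have "(\<Sum>a=1..n. (hh n d c a - hh n d c (a+1))^2) = (\<Sum>a=1..n. (if a = d - 1 then 1 else 0))"
    using assms by (intro sum.cong) (auto simp: hh_def)
  also have "\<dots> = 1" using assms by (simp add: sum.delta) arith
  also have "hh n d c 0 - hh n d c 1 = c" using assms by (simp add: hh_def)
  finally show ?thesis .
qed

lemma hh_cross:
  fixes D :: "nat \<Rightarrow> int"
  assumes "1 \<le> n" "2 \<le> d" "d \<le> n+1" "D 0 = 0" "D (n+1) = 0"
  shows "(\<Sum>a=0..n. (D a - D (a+1)) * (hh n d c a - hh n d c (a+1))) = D d - D (d - 1) - c * D 1"
proof -
  have "(\<Sum>a=0..n. (D a - D (a+1)) * (hh n d c a - hh n d c (a+1)))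
     = (D 0 - D 1) * (hh n d c 0 - hh n d c 1) + (\<Sum>a=1..n. (D a - D (a+1)) * (hh n d c a - hh n d c (a+1)))"
    by (simp add: sum.atLeast_Suc_atMost)
  also have "(\<Sum>a=1..n. (D a - D (a+1)) * (hh n d c a - hh n d c (a+1))) = (\<Sum>a=1..n. (if a = d - 1 then D (a+1) - D a else 0))"
    using assms by (intro sum.cong) (auto simp: hh_def)
  also have "\<dots> = D (d - 1 + 1) - D (d-1)" using assms by (simp add: sum.delta) arith
  also have "d - 1 + 1 = d" using assms by simp
  also have "hh n d c 0 - hh n d c 1 = c" using assms by (simp add: hh_def)
  finally show ?thesis using assms by (simp add: algebra_simps)
qed

lemma core_identity:
  fixes s t :: "nat \<Rightarrow> int" and c :: int
  assumes "1 \<le> n" "2 \<le> d" "d \<le> n+1" "s 0 = 0" "t 0 = 0" "s (n+1) = 0" "t (n+1) = 0"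
  shows "4*(\<Sum>a=1..<n. s a * s(a+1) + t a * t(a+1)) - 4*(\<Sum>a=1..n. (s a)^2 + (t a)^2)
    + (\<Sum>a=0..n. ((s a - t a) + hh n d c a - ((s (a+1) - t (a+1)) + hh n d c (a+1)))^2)
   = 2*(\<Sum>a=1..<n. (s a + t a) * (s (a+1) + t (a+1))) - 2*(\<Sum>a=1..n. (s a + t a)^2)
    + 2*((s d - t d) - (s (d-1) - t (d-1)) - c * (s 1 - t 1)) + c^2 + 1"
proof -
  define D where "D a = s a - t a" for a
  define h where "h a = hh n d c a" for a
  have D0: "D 0 = 0" "D (n+1) = 0" using assms by (auto simp: D_def)
  have exp: "(\<Sum>a=0..n. (D a + h a - (D (a+1) + h (a+1)))^2)
     = (\<Sum>a=0..n. (D a - D (a+1))^2) + 2*(\<Sum>a=0..n. (D a - D (a+1)) * (h a - h (a+1))) + (\<Sum>a=0..n. (h a - h (a+1))^2)"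
  proof -
    have "\<And>a. (D a + h a - (D (a+1) + h (a+1)))^2 = (D a - D (a+1))^2 + 2*((D a - D (a+1)) * (h a - h (a+1))) + (h a - h (a+1))^2"
      by (simp add: power2_eq_square algebra_simps)
    then show ?thesis by (simp add: sum.distrib sum_distrib_left)
  qed
  have e1: "(\<Sum>a=0..n. (D a - D (a+1))^2) = 2*(\<Sum>a=1..n. (D a)^2) - 2*(\<Sum>a=1..<n. D a * D (a+1))"
    using sq_diff_sum[of D n] D0 by simp
  have e2: "(\<Sum>a=0..n. (D a - D (a+1)) * (h a - h (a+1))) = D d - D (d-1) - c * D 1"
    unfolding h_def using hh_cross[OF assms(1-3) D0] by simp
  have e3: "(\<Sum>a=0..n. (h a - h (a+1))^2) = c^2 + 1"
    unfolding h_def using hh_sq[OF assms(1-3)] by simp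
  have q1: "4*(\<Sum>a=1..<n. s a * s(a+1) + t a * t(a+1)) = 2*(\<Sum>a=1..<n. (s a + t a) * (s (a+1) + t (a+1))) + 2*(\<Sum>a=1..<n. D a * D (a+1))"
    by (simp add: D_def sum_distrib_left sum.distrib[symmetric] algebra_simps)
  have q2: "4*(\<Sum>a=1..n. (s a)^2 + (t a)^2) = 2*(\<Sum>a=1..n. (s a + t a)^2) + 2*(\<Sum>a=1..n. (D a)^2)"
    by (simp add: D_def sum_distrib_left sum.distrib[symmetric] power2_eq_square algebra_simps)
  show ?thesis
    using exp e1 e2 e3 q1 q2 unfolding D_def h_def by (simp add: algebra_simps)
qed

lemma core_identity2:
  fixes s t E :: "nat \<Rightarrow> int" and c :: int
  assumes "1 \<le> n" "2 \<le> d" "d \<le> n+1" "s 0 = 0" "t 0 = 0" "s (n+1) = 0" "t (n+1) = 0"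
    and E: "\<And>a. E a = hh n d c a + (s a - t a)"
  shows "4*(\<Sum>a=1..<n. s a * s(a+1) + t a * t(a+1)) - 4*(\<Sum>a=1..n. (s a)^2 + (t a)^2)
    + (\<Sum>a=0..n. (E a - E (a+1))^2)
   = 2*(\<Sum>a=1..<n. (s a + t a) * (s (a+1) + t (a+1))) - 2*(\<Sum>a=1..n. (s a + t a)^2)
    + 2*((s d - t d) - (s (d-1) - t (d-1)) - c * (s 1 - t 1)) + c^2 + 1"
proof -
  have "(\<Sum>a=0..n. (E a - E (a+1))^2) = (\<Sum>a=0..n. ((s a - t a) + hh n d c a - ((s (a+1) - t (a+1)) + hh n d c (a+1)))^2)"
    by (intro sum.cong) (auto simp: E algebra_simps)
  then show ?thesis using core_identity[OF assms(1-7), of c] by simp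
qed

locale rc =
  fixes n d :: nat and cfg :: "nat \<Rightarrow> (nat \<times> int) multiset" and lam :: "nat multiset" and l J :: nat
  assumes n1: "1 \<le> n" and d2: "2 \<le> d" and dn: "d \<le> n + 1" and l1: "1 \<le> l" and lJ: "l < J"
    and lens: "\<forall>a\<in>{1..n}. \<forall>p\<in>#cfg a. 0 < fst p \<and> fst p < J"
begin

abbreviation "C \<equiv> choices n cfg"

definition Q where "Q S = tau_obj n lam S (n+1)"
definition Nd where "Nd S a = (if 1 \<le> a \<and> a \<le> n then int (sum_mset (image_mset fst (S a))) else 0)"
definition Gf where "Gf S = (\<Sum>p\<in>#S 1. int (min l (fst p)))"
definition rig where "rig S = (\<Sum>a=1..n. sum_mset (image_mset snd (S a)))"
definition eps where "eps j = (if j \<le> l then 1 else 0 :: int)"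
definition Ec where "Ec c S T a j = hh n d (c j) a + (cnt (S a) j - cnt (T a) j)"
definition cost where "cost E = (\<Sum>j=1..J. \<Sum>a=0..n. (E a j - E (a+1) j)^2)"
definition cL where "cL j = (if l < j then 1 else 0 :: int)"
definition cK where "cK j = (if l < j then -1 else 0 :: int)"
definition cR where "cR j = (if l < j then 1 else 2 :: int)"
definition Psi where
  "Psi S T = (\<Sum>j=1..J. 4 * cntn lam j * (cnt (S 1) j + cnt (T 1) j)
      + 2*(\<Sum>a=1..<n. (cnt (S a) j + cnt (T a) j) * (cnt (S (a+1)) j + cnt (T (a+1)) j))
      - 2*(\<Sum>a=1..n. (cnt (S a) j + cnt (T a) j)^2)
      - 2*(cnt (S d) j + cnt (T d) j) - 2*(cnt (S (d-1)) j + cnt (T (d-1)) j)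
      - 2*(1 - eps j) * (cnt (S 1) j + cnt (T 1) j) + (1 - eps j)^2 + 1)
    - 4 * (rig S + rig T)"

lemma choice_out: "S \<in> C \<Longrightarrow> a \<notin> {1..n} \<Longrightarrow> S a = {#}"
  by (simp add: choices_def)

lemma choice_sub: "S \<in> C \<Longrightarrow> a \<in> {1..n} \<Longrightarrow> S a \<subseteq># cfg a"
  by (simp add: choices_def)

lemma choice_len: "S \<in> C \<Longrightarrow> p \<in># S a \<Longrightarrow> fst p \<le> J"
proof -
  assume S: "S \<in> C" and p: "p \<in># S a"
  then have a: "a \<in> {1..n}" using choice_out by fastforce
  then have "p \<in># cfg a" using choice_sub[OF S a] p by (auto dest: mset_subset_eqD)
  then show ?thesis using lens a by fastforce
qed

lemma cnt_out: "S \<in> C \<Longrightarrow> a \<notin> {1..n} \<Longrightarrow> cnt (S a) j = 0"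
  by (simp add: choice_out)

lemma Q_cnt:
  assumes S: "S \<in> C"
  shows "Q S = (\<Sum>j=1..J. cntn lam j * cnt (S 1) j + (\<Sum>a=1..<n. cnt (S a) j * cnt (S (a+1)) j)
             - (\<Sum>a=1..n. (cnt (S a) j)^2)) - rig S"
proof -
  have b: "\<forall>p\<in>#S a. fst p \<le> J" for a using choice_len[OF S] by auto
  have m1: "minm lam (image_mset fst (S 1)) = (\<Sum>j=1..J. cntn lam j * cnt (S 1) j)"
    using minm_cntn b by blast
  have m2: "(\<Sum>a=1..<n. minm (image_mset fst (S a)) (image_mset fst (S (a+1))))
      = (\<Sum>j=1..J. \<Sum>a=1..<n. cnt (S a) j * cnt (S (a+1)) j)"
  proof -
    have "(\<Sum>a=1..<n. minm (image_mset fst (S a)) (image_mset fst (S (a+1))))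
      = (\<Sum>a=1..<n. \<Sum>j=1..J. cnt (S a) j * cnt (S (a+1)) j)"
      by (intro sum.cong refl minm_cnt) (use b in auto)
    also have "\<dots> = (\<Sum>j=1..J. \<Sum>a=1..<n. cnt (S a) j * cnt (S (a+1)) j)"
      by (rule sum.swap)
    finally show ?thesis .
  qed
  have m3: "(\<Sum>a=1..n. minm (image_mset fst (S a)) (image_mset fst (S a)))
      = (\<Sum>j=1..J. \<Sum>a=1..n. (cnt (S a) j)^2)"
  proof -
    have "(\<Sum>a=1..n. minm (image_mset fst (S a)) (image_mset fst (S a)))
      = (\<Sum>a=1..n. \<Sum>j=1..J. cnt (S a) j * cnt (S a) j)"
      by (intro sum.cong refl minm_cnt) (use b in auto)
    also have "\<dots> = (\<Sum>j=1..J. \<Sum>a=1..n. cnt (S a) j * cnt (S a) j)"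
      by (rule sum.swap)
    finally show ?thesis by (simp add: power2_eq_square)
  qed
  have "Q S = minm lam (image_mset fst (S 1))
      + (\<Sum>a=1..<n. minm (image_mset fst (S a)) (image_mset fst (S (a+1))))
      - (\<Sum>a=1..n. minm (image_mset fst (S a)) (image_mset fst (S a))) - rig S"
    by (simp add: Q_def tau_obj_def rig_def Let_def)
  also have "\<dots> = (\<Sum>j=1..J. cntn lam j * cnt (S 1) j) + (\<Sum>j=1..J. \<Sum>a=1..<n. cnt (S a) j * cnt (S (a+1)) j)
      - (\<Sum>j=1..J. \<Sum>a=1..n. (cnt (S a) j)^2) - rig S"
    using m1 m2 m3 by simp
  finally show ?thesis by (simp add: sum.distrib sum_subtractf)
qed

lemma Nd_cnt:
  assumes S: "S \<in> C"
  shows "Nd S a = (\<Sum>j=1..J. cnt (S a) j)"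
proof (cases "a \<in> {1..n}")
  case True
  then show ?thesis using len_cnt[of "S a" J] choice_len[OF S] by (auto simp: Nd_def)
next
  case False
  then show ?thesis using cnt_out[OF S False] by (auto simp: Nd_def)
qed

lemma Gf_cnt:
  assumes S: "S \<in> C"
  shows "Gf S = (\<Sum>j=1..J. eps j * cnt (S 1) j)"
  using G_cnt[of "S 1" J l] choice_len[OF S] by (auto simp: Gf_def eps_def)

lemma l_sum: "int l = (\<Sum>j=1..J. eps j)"
  using nat_as_sum[of l J] lJ by (simp add: eps_def)

lemma cost_Ec:
  assumes S: "S \<in> C" and T: "T \<in> C"
  shows "4*(\<Sum>a=1..<n. cnt (S a) j * cnt (S (a+1)) j + cnt (T a) j * cnt (T (a+1)) j)
     - 4*(\<Sum>a=1..n. (cnt (S a) j)^2 + (cnt (T a) j)^2)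
     + (\<Sum>a=0..n. (Ec c S T a j - Ec c S T (a+1) j)^2)
   = 2*(\<Sum>a=1..<n. (cnt (S a) j + cnt (T a) j) * (cnt (S (a+1)) j + cnt (T (a+1)) j))
     - 2*(\<Sum>a=1..n. (cnt (S a) j + cnt (T a) j)^2)
     + 2*((cnt (S d) j - cnt (T d) j) - (cnt (S (d-1)) j - cnt (T (d-1)) j) - c j * (cnt (S 1) j - cnt (T 1) j)) + (c j)^2 + 1"
  by (rule core_identity2[OF n1 d2 dn]) (auto simp: cnt_out[OF S] cnt_out[OF T] Ec_def)

end

context rc
begin

lemma perj_L:
  assumes S: "S \<in> C" and T: "T \<in> C"
  shows "4*(cntn lam j * cnt (S 1) j + (\<Sum>a=1..<n. cnt (S a) j * cnt (S (a+1)) j) - (\<Sum>a=1..n. (cnt (S a) j)^2) - cnt (S d) j)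
    + 4*(cntn lam j * cnt (T 1) j + (\<Sum>a=1..<n. cnt (T a) j * cnt (T (a+1)) j) - (\<Sum>a=1..n. (cnt (T a) j)^2)
         + eps j * cnt (T 1) j - cnt (T 1) j - cnt (T (d-1)) j)
    + (\<Sum>a=0..n. (Ec cL S T a j - Ec cL S T (a+1) j)^2)
   = 4 * cntn lam j * (cnt (S 1) j + cnt (T 1) j)
      + 2*(\<Sum>a=1..<n. (cnt (S a) j + cnt (T a) j) * (cnt (S (a+1)) j + cnt (T (a+1)) j))
      - 2*(\<Sum>a=1..n. (cnt (S a) j + cnt (T a) j)^2)
      - 2*(cnt (S d) j + cnt (T d) j) - 2*(cnt (S (d-1)) j + cnt (T (d-1)) j)
      - 2*(1 - eps j) * (cnt (S 1) j + cnt (T 1) j) + (1 - eps j)^2 + 1"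
  using cost_Ec[OF S T, of j cL]
  by (cases "l < j") (auto simp: sum.distrib cL_def eps_def algebra_simps)

lemma perj_K:
  assumes S: "S \<in> C" and T: "T \<in> C"
  shows "4*(cntn lam j * cnt (S 1) j + (\<Sum>a=1..<n. cnt (S a) j * cnt (S (a+1)) j) - (\<Sum>a=1..n. (cnt (S a) j)^2)
         + eps j * cnt (S 1) j - cnt (S 1) j - cnt (S d) j)
    + 4*(cntn lam j * cnt (T 1) j + (\<Sum>a=1..<n. cnt (T a) j * cnt (T (a+1)) j) - (\<Sum>a=1..n. (cnt (T a) j)^2)
         - cnt (T (d-1)) j)
    + (\<Sum>a=0..n. (Ec cK S T a j - Ec cK S T (a+1) j)^2)
   = 4 * cntn lam j * (cnt (S 1) j + cnt (T 1) j)
      + 2*(\<Sum>a=1..<n. (cnt (S a) j + cnt (T a) j) * (cnt (S (a+1)) j + cnt (T (a+1)) j))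
      - 2*(\<Sum>a=1..n. (cnt (S a) j + cnt (T a) j)^2)
      - 2*(cnt (S d) j + cnt (T d) j) - 2*(cnt (S (d-1)) j + cnt (T (d-1)) j)
      - 2*(1 - eps j) * (cnt (S 1) j + cnt (T 1) j) + (1 - eps j)^2 + 1"
  using cost_Ec[OF S T, of j cK]
  by (cases "l < j") (auto simp: sum.distrib cK_def eps_def algebra_simps)

lemma perj_R:
  assumes S: "S \<in> C" and T: "T \<in> C"
  shows "4*(cntn lam j * cnt (S 1) j + (\<Sum>a=1..<n. cnt (S a) j * cnt (S (a+1)) j) - (\<Sum>a=1..n. (cnt (S a) j)^2)
         + eps j * cnt (S 1) j - cnt (S d) j)
    + 4*(cntn lam j * cnt (T 1) j + (\<Sum>a=1..<n. cnt (T a) j * cnt (T (a+1)) j) - (\<Sum>a=1..n. (cnt (T a) j)^2)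
         - cnt (T 1) j - cnt (T (d-1)) j) - 4 * eps j
    + (\<Sum>a=0..n. (Ec cR S T a j - Ec cR S T (a+1) j)^2)
   = 4 * cntn lam j * (cnt (S 1) j + cnt (T 1) j)
      + 2*(\<Sum>a=1..<n. (cnt (S a) j + cnt (T a) j) * (cnt (S (a+1)) j + cnt (T (a+1)) j))
      - 2*(\<Sum>a=1..n. (cnt (S a) j + cnt (T a) j)^2)
      - 2*(cnt (S d) j + cnt (T d) j) - 2*(cnt (S (d-1)) j + cnt (T (d-1)) j)
      - 2*(1 - eps j) * (cnt (S 1) j + cnt (T 1) j) + (1 - eps j)^2 + 1"
  using cost_Ec[OF S T, of j cR]
  by (cases "l < j") (auto simp: sum.distrib cR_def eps_def algebra_simps)

lemma FL:
  assumes S: "S \<in> C" and T: "T \<in> C"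
  shows "4*((Q S - Nd S d) + (Q T + Gf T - Nd T 1 - Nd T (d-1))) + cost (Ec cL S T) = Psi S T"
proof -
  have "4*((Q S - Nd S d) + (Q T + Gf T - Nd T 1 - Nd T (d-1))) + cost (Ec cL S T)
    = (\<Sum>j=1..J. 4*(cntn lam j * cnt (S 1) j + (\<Sum>a=1..<n. cnt (S a) j * cnt (S (a+1)) j) - (\<Sum>a=1..n. (cnt (S a) j)^2) - cnt (S d) j)
    + 4*(cntn lam j * cnt (T 1) j + (\<Sum>a=1..<n. cnt (T a) j * cnt (T (a+1)) j) - (\<Sum>a=1..n. (cnt (T a) j)^2)
         + eps j * cnt (T 1) j - cnt (T 1) j - cnt (T (d-1)) j)
    + (\<Sum>a=0..n. (Ec cL S T a j - Ec cL S T (a+1) j)^2)) - 4*(rig S + rig T)"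
    unfolding Q_cnt[OF S] Q_cnt[OF T] Nd_cnt[OF S] Nd_cnt[OF T] Gf_cnt[OF T] cost_def
    by (simp add: sum.distrib sum_subtractf sum_distrib_left algebra_simps)
  also have "\<dots> = Psi S T" unfolding Psi_def by (rule arg_cong2[where f="(-)"], rule sum.cong, rule refl, rule perj_L[OF S T], rule refl)
  finally show ?thesis .
qed

lemma FK:
  assumes S: "S \<in> C" and T: "T \<in> C"
  shows "4*((Q S + Gf S - Nd S 1 - Nd S d) + (Q T - Nd T (d-1))) + cost (Ec cK S T) = Psi S T"
proof -
  have "4*((Q S + Gf S - Nd S 1 - Nd S d) + (Q T - Nd T (d-1))) + cost (Ec cK S T)
    = (\<Sum>j=1..J. 4*(cntn lam j * cnt (S 1) j + (\<Sum>a=1..<n. cnt (S a) j * cnt (S (a+1)) j) - (\<Sum>a=1..n. (cnt (S a) j)^2)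
         + eps j * cnt (S 1) j - cnt (S 1) j - cnt (S d) j)
    + 4*(cntn lam j * cnt (T 1) j + (\<Sum>a=1..<n. cnt (T a) j * cnt (T (a+1)) j) - (\<Sum>a=1..n. (cnt (T a) j)^2)
         - cnt (T (d-1)) j)
    + (\<Sum>a=0..n. (Ec cK S T a j - Ec cK S T (a+1) j)^2)) - 4*(rig S + rig T)"
    unfolding Q_cnt[OF S] Q_cnt[OF T] Nd_cnt[OF S] Nd_cnt[OF T] Gf_cnt[OF S] cost_def
    by (simp add: sum.distrib sum_subtractf sum_distrib_left algebra_simps)
  also have "\<dots> = Psi S T" unfolding Psi_def by (rule arg_cong2[where f="(-)"], rule sum.cong, rule refl, rule perj_K[OF S T], rule refl)
  finally show ?thesis .
qed

lemma FR:
  assumes S: "S \<in> C" and T: "T \<in> C"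
  shows "4*((Q S + Gf S - Nd S d) + (Q T - Nd T 1 - Nd T (d-1)) - int l) + cost (Ec cR S T) = Psi S T"
proof -
  have "4*((Q S + Gf S - Nd S d) + (Q T - Nd T 1 - Nd T (d-1)) - int l) + cost (Ec cR S T)
    = (\<Sum>j=1..J. 4*(cntn lam j * cnt (S 1) j + (\<Sum>a=1..<n. cnt (S a) j * cnt (S (a+1)) j) - (\<Sum>a=1..n. (cnt (S a) j)^2)
         + eps j * cnt (S 1) j - cnt (S d) j)
    + 4*(cntn lam j * cnt (T 1) j + (\<Sum>a=1..<n. cnt (T a) j * cnt (T (a+1)) j) - (\<Sum>a=1..n. (cnt (T a) j)^2)
         - cnt (T 1) j - cnt (T (d-1)) j) - 4 * eps j
    + (\<Sum>a=0..n. (Ec cR S T a j - Ec cR S T (a+1) j)^2)) - 4*(rig S + rig T)"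
    unfolding Q_cnt[OF S] Q_cnt[OF T] Nd_cnt[OF S] Nd_cnt[OF T] Gf_cnt[OF S] cost_def l_sum
    by (simp add: sum.distrib sum_subtractf sum_distrib_left algebra_simps)
  also have "\<dots> = Psi S T" unfolding Psi_def by (rule arg_cong2[where f="(-)"], rule sum.cong, rule refl, rule perj_R[OF S T], rule refl)
  finally show ?thesis .
qed

end

definition kp :: "(nat \<times> int) multiset \<Rightarrow> nat \<Rightarrow> int" where
  "kp Z j = int (size (filter_mset (\<lambda>p. fst p = j) Z))"

lemma exists_sub_size:
  fixes M :: "'a multiset"
  shows "k \<le> size M \<Longrightarrow> \<exists>N. N \<subseteq># M \<and> size N = k"
proof (induction M arbitrary: k)
  case empty
  then show ?case by auto
next
  case (add x M)
  show ?case
  proof (cases "k \<le> size M")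
    case True
    then obtain N where "N \<subseteq># M" "size N = k" using add.IH by blast
    then show ?thesis by (intro exI[of _ N]) (auto intro: subset_mset.order_trans)
  next
    case False
    then have "k = size (add_mset x M)" using add.prems by simp
    then show ?thesis by blast
  qed
qed

lemma sum_filter_eq:
  fixes Z :: "(nat \<times> int) multiset"
  shows "finite A \<Longrightarrow> (\<Sum>j\<in>A. filter_mset (\<lambda>p. fst p = j) Z) = filter_mset (\<lambda>p. fst p \<in> A) Z"
proof (induction A rule: finite_induct)
  case empty
  then show ?case by simp
next
  case (insert x F)
  then show ?case by (simp add: multiset_eq_iff)
qed

lemma cnt_sum: "finite A \<Longrightarrow> cnt (\<Sum>i\<in>A. f i) j = (\<Sum>i\<in>A. cnt (f i) j)"
  by (induction A rule: finite_induct) auto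

lemma cnt_level:
  assumes "\<forall>p\<in>#X. fst p = i"
  shows "cnt X j = (if j \<le> i then int (size X) else 0)"
proof -
  have "filter_mset (\<lambda>p. j \<le> fst p) X = (if j \<le> i then X else {#})"
    using assms by (auto simp: filter_mset_eq_conv)
  then show ?thesis by (simp add: cnt_def)
qed

lemma cnt_filter_level: "cnt (filter_mset (\<lambda>p. fst p = i) Z) j = (if j \<le> i then kp Z i else 0)"
  using cnt_level[of "filter_mset (\<lambda>p. fst p = i) Z" i j] by (simp add: kp_def)

lemma sum_sub_mono:
  fixes X Y :: "nat \<Rightarrow> 'a multiset"
  shows "finite A \<Longrightarrow> (\<forall>i\<in>A. X i \<subseteq># Y i) \<Longrightarrow> (\<Sum>i\<in>A. X i) \<subseteq># (\<Sum>i\<in>A. Y i)"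
  by (induction A rule: finite_induct) (auto intro: subset_mset.add_mono)

lemma realize1:
  fixes Z :: "(nat \<times> int) multiset" and D :: "nat \<Rightarrow> int"
  assumes lenZ: "\<forall>p\<in>#Z. 0 < fst p \<and> fst p < J"
    and DJ: "\<forall>j\<ge>J. D j = 0"
    and step: "\<forall>j\<ge>1. \<bar>D j - D (j+1)\<bar> \<le> kp Z j \<and> even (D j - D (j+1) + kp Z j)"
  shows "\<exists>X. X \<subseteq># Z \<and> (\<forall>j\<ge>1. 2*cnt X j - cnt Z j = D j)"
proof -
  define k where "k j = nat ((kp Z j + D j - D (j+1)) div 2)" for j
  have kprop: "2 * int (k j) = kp Z j + D j - D (j+1) \<and> k j \<le> size (filter_mset (\<lambda>p. fst p = j) Z)"
    if "1 \<le> j" for j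
  proof -
    have h1: "\<bar>D j - D (j+1)\<bar> \<le> kp Z j" and h2: "even (D j - D (j+1) + kp Z j)" using step that by auto
    define v where "v = kp Z j + D j - D (j+1)"
    have "even v" using h2 unfolding v_def by (simp add: algebra_simps)
    then obtain m where m: "v = 2 * m" by (auto elim!: evenE)
    have "0 \<le> m" "m \<le> kp Z j" using h1 m unfolding v_def by auto
    moreover have "k j = nat m" unfolding k_def using m v_def by simp
    ultimately show ?thesis using m unfolding v_def kp_def by auto
  qed
  have "\<forall>j. \<exists>Xj. Xj \<subseteq># filter_mset (\<lambda>p. fst p = j) Z \<and> (1 \<le> j \<longrightarrow> size Xj = k j)"
  proof
    fix j
    show "\<exists>Xj. Xj \<subseteq># filter_mset (\<lambda>p. fst p = j) Z \<and> (1 \<le> j \<longrightarrow> size Xj = k j)"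
    proof (cases "1 \<le> j")
      case True
      then show ?thesis using exists_sub_size[of "k j" "filter_mset (\<lambda>p. fst p = j) Z"] kprop by blast
    next
      case False
      then show ?thesis by (intro exI[of _ "{#}"]) auto
    qed
  qed
  then obtain Xf where Xf: "\<And>j. Xf j \<subseteq># filter_mset (\<lambda>p. fst p = j) Z" "\<And>j. 1 \<le> j \<Longrightarrow> size (Xf j) = k j"
    by metis
  define X where "X = (\<Sum>i\<in>{1..<J}. Xf i)"
  have Zsum: "Z = (\<Sum>i\<in>{1..<J}. filter_mset (\<lambda>p. fst p = i) Z)"
  proof -
    have "(\<Sum>i\<in>{1..<J}. filter_mset (\<lambda>p. fst p = i) Z) = filter_mset (\<lambda>p. fst p \<in> {1..<J}) Z"
      by (rule sum_filter_eq) simp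
    also have "\<dots> = Z" using lenZ by (auto simp: filter_mset_eq_conv)
    finally show ?thesis by simp
  qed
  have XZ: "X \<subseteq># Z"
    unfolding X_def by (subst Zsum) (rule sum_sub_mono, auto intro: Xf)
  have lev: "\<forall>p\<in>#Xf i. fst p = i" for i
    using Xf(1)[of i] by (auto dest: mset_subset_eqD)
  have res: "2*cnt X j - cnt Z j = D j" if j1: "1 \<le> j" for j
  proof -
    have cX: "cnt X j = (\<Sum>i\<in>{1..<J}. if j \<le> i then int (k i) else 0)"
      unfolding X_def cnt_sum[OF finite_atLeastLessThan]
      by (intro sum.cong refl) (auto simp: cnt_level[OF lev] Xf(2))
    have cZ: "cnt Z j = (\<Sum>i\<in>{1..<J}. if j \<le> i then kp Z i else 0)"
      apply (subst Zsum)
      unfolding cnt_sum[OF finite_atLeastLessThan]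
      by (intro sum.cong refl) (simp add: cnt_filter_level)
    have "2*cnt X j - cnt Z j = (\<Sum>i\<in>{1..<J}. if j \<le> i then 2 * int (k i) - kp Z i else 0)"
      unfolding cX cZ by (simp add: sum_distrib_left sum_subtractf[symmetric] if_distrib cong: if_cong)
    also have "\<dots> = (\<Sum>i\<in>{1..<J}. if j \<le> i then D i - D (Suc i) else 0)"
      by (intro sum.cong refl) (auto simp: kprop)
    also have "\<dots> = (\<Sum>i\<in>{j..<J}. D i - D (Suc i))"
      using j1 by (simp add: sum.If_cases) (rule sum.cong, auto)
    also have "\<dots> = D j"
    proof (cases "j \<le> J")
      case True
      have "(\<Sum>i\<in>{j..<J}. D i - D (Suc i)) = - (\<Sum>i\<in>{j..<J}. D (Suc i) - D i)"
        by (simp add: sum_negf[symmetric])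
      also have "\<dots> = D j - D J" using sum_Suc_diff'[OF True, of D] by simp
      finally show ?thesis using DJ by simp
    next
      case False
      then show ?thesis using DJ by simp
    qed
    finally show ?thesis .
  qed
  show ?thesis using XZ res by blast
qed

definition Zs :: "(nat \<Rightarrow> (nat \<times> int) multiset) \<Rightarrow> (nat \<Rightarrow> (nat \<times> int) multiset) \<Rightarrow> nat \<Rightarrow> (nat \<times> int) multiset" where
  "Zs S T a = (S a - T a) + (T a - S a)"

lemma cnt_step: "cnt M j - cnt M (j+1) = kp M j"
proof -
  have "filter_mset (\<lambda>p. j \<le> fst p) M = filter_mset (\<lambda>p. fst p = j) M + filter_mset (\<lambda>p. j+1 \<le> fst p) M"
    by (auto simp: multiset_eq_iff)
  then show ?thesis by (simp add: cnt_def kp_def)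
qed

lemma kp_add[simp]: "kp (M + N) j = kp M j + kp N j"
  by (simp add: kp_def)

lemma inter_split: "M = (M \<inter># N) + (M - N)"
  by (auto simp: multiset_eq_iff)

lemma Dv_step:
  "\<bar>(cnt M j - cnt N j) - (cnt M (j+1) - cnt N (j+1))\<bar> \<le> kp ((M - N) + (N - M)) j
   \<and> even ((cnt M j - cnt N j) - (cnt M (j+1) - cnt N (j+1)) + kp ((M - N) + (N - M)) j)"
proof -
  have "cnt M j - cnt N j = cnt (M - N) j - cnt (N - M) j" for j
    using inter_split[of M N] inter_split[of N M]
    by (metis add_diff_cancel_left cnt_add diff_diff_eq2 subset_mset.inf_commute)
  then have "(cnt M j - cnt N j) - (cnt M (j+1) - cnt N (j+1)) = kp (M - N) j - kp (N - M) j"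
    using cnt_step[of "M - N" j] cnt_step[of "N - M" j] by simp
  moreover have "kp (M - N) j \<ge> 0" "kp (N - M) j \<ge> 0" by (auto simp: kp_def)
  ultimately show ?thesis by auto
qed

context rc
begin

lemma realize:
  assumes S: "S \<in> C" and T: "T \<in> C"
    and DJ: "\<forall>a\<in>{1..n}. \<forall>j\<ge>J. D a j = 0"
    and step: "\<forall>a\<in>{1..n}. \<forall>j\<ge>1. \<bar>D a j - D a (j+1)\<bar> \<le> kp (Zs S T a) j \<and> even (D a j - D a (j+1) + kp (Zs S T a) j)"
  shows "\<exists>S' T'. S' \<in> C \<and> T' \<in> C \<and> (\<forall>a. S' a + T' a = S a + T a)
          \<and> (\<forall>a\<in>{1..n}. \<forall>j\<ge>1. cnt (S' a) j - cnt (T' a) j = D a j)"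
proof -
  have "\<forall>a\<in>{1..n}. \<exists>X. X \<subseteq># Zs S T a \<and> (\<forall>j\<ge>1. 2*cnt X j - cnt (Zs S T a) j = D a j)"
  proof
    fix a assume a: "a \<in> {1..n}"
    have "\<forall>p\<in>#Zs S T a. 0 < fst p \<and> fst p < J"
    proof
      fix p assume "p \<in># Zs S T a"
      then have "p \<in># S a \<or> p \<in># T a" unfolding Zs_def by (auto dest: in_diffD)
      then have "p \<in># cfg a" using choice_sub[OF S a] choice_sub[OF T a] by (auto dest: mset_subset_eqD)
      then show "0 < fst p \<and> fst p < J" using lens a by blast
    qed
    then show "\<exists>X. X \<subseteq># Zs S T a \<and> (\<forall>j\<ge>1. 2*cnt X j - cnt (Zs S T a) j = D a j)"
      using realize1[of "Zs S T a" J "D a"] DJ step a by blast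
  qed
  then obtain X where X: "\<And>a. a \<in> {1..n} \<Longrightarrow> X a \<subseteq># Zs S T a"
      "\<And>a j. a \<in> {1..n} \<Longrightarrow> 1 \<le> j \<Longrightarrow> 2*cnt (X a) j - cnt (Zs S T a) j = D a j"
    by metis
  define S' where "S' a = (if a \<in> {1..n} then (S a \<inter># T a) + X a else {#})" for a
  define T' where "T' a = (if a \<in> {1..n} then (S a \<inter># T a) + (Zs S T a - X a) else {#})" for a
  have sum: "S' a + T' a = S a + T a" for a
  proof (cases "a \<in> {1..n}")
    case True
    have "S' a + T' a = (S a \<inter># T a) + (S a \<inter># T a) + (X a + (Zs S T a - X a))"
      using True by (simp add: S'_def T'_def algebra_simps)
    also have "X a + (Zs S T a - X a) = Zs S T a" using X(1)[OF True] by (rule subset_mset.add_diff_inverse)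
    finally show ?thesis by (auto simp: multiset_eq_iff Zs_def)
  next
    case False
    then show ?thesis by (simp only: S'_def T'_def choice_out[OF S False] choice_out[OF T False] if_False)
  qed
  have sub: "(S a \<inter># T a) + Zs S T a \<subseteq># cfg a" if a: "a \<in> {1..n}" for a
  proof -
    show ?thesis unfolding subseteq_mset_def
    proof
      fix x
      have "count (S a) x \<le> count (cfg a) x" "count (T a) x \<le> count (cfg a) x"
        using mset_subset_eq_count[OF choice_sub[OF S a]] mset_subset_eq_count[OF choice_sub[OF T a]] by auto
      then show "count (S a \<inter># T a + Zs S T a) x \<le> count (cfg a) x" by (simp add: Zs_def)
    qed
  qed
  have S'C: "S' \<in> C"
    unfolding choices_def
  proof (intro CollectI conjI ballI allI impI)
    fix a assume a: "a \<in> {1..n}"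
    have "S' a \<subseteq># (S a \<inter># T a) + Zs S T a" using X(1)[OF a] a by (simp add: S'_def)
    then show "S' a \<subseteq># cfg a" using sub[OF a] by (rule subset_mset.order_trans)
  next
    fix a :: nat assume "a \<notin> {1..n}" then show "S' a = {#}" unfolding S'_def by (rule if_not_P)
  qed
  have T'C: "T' \<in> C"
    unfolding choices_def
  proof (intro CollectI conjI ballI allI impI)
    fix a assume a: "a \<in> {1..n}"
    have "T' a \<subseteq># (S a \<inter># T a) + Zs S T a" using a by (simp add: T'_def)
    then show "T' a \<subseteq># cfg a" using sub[OF a] by (rule subset_mset.order_trans)
  next
    fix a :: nat assume "a \<notin> {1..n}" then show "T' a = {#}" unfolding T'_def by (rule if_not_P)
  qed
  have D: "cnt (S' a) j - cnt (T' a) j = D a j" if a: "a \<in> {1..n}" and j: "1 \<le> j" for a j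
  proof -
    have "cnt (Zs S T a) j = cnt (X a) j + cnt (Zs S T a - X a) j"
      using subset_mset.add_diff_inverse[OF X(1)[OF a]] by (metis cnt_add)
    then show ?thesis using X(2)[OF a j] a by (simp add: S'_def T'_def)
  qed
  show ?thesis using S'C T'C sum D by blast
qed

lemma Ec_out0: "S \<in> C \<Longrightarrow> T \<in> C \<Longrightarrow> Ec c S T 0 j = c j"
  by (simp add: Ec_def hh_def cnt_out)

lemma Ec_outn: "S \<in> C \<Longrightarrow> T \<in> C \<Longrightarrow> Ec c S T (n+1) j = 1"
  by (simp add: Ec_def hh_def cnt_out)

lemma realize_E:
  assumes S: "S \<in> C" and T: "T \<in> C"
    and EJ: "\<forall>a\<in>{1..n}. \<forall>j\<ge>J. E' a j = hh n d 0 a"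
    and step: "\<forall>a\<in>{1..n}. \<forall>j\<ge>1. \<bar>E' a j - E' a (j+1)\<bar> \<le> \<bar>Ec c S T a j - Ec c S T a (j+1)\<bar>
                 \<and> even (E' a j - E' a (j+1) - (Ec c S T a j - Ec c S T a (j+1)))"
    and bd: "\<forall>j\<in>{1..J}. E' 0 j = c' j \<and> E' (n+1) j = 1"
  shows "\<exists>S' T'. S' \<in> C \<and> T' \<in> C \<and> (\<forall>a. S' a + T' a = S a + T a) \<and> cost (Ec c' S' T') = cost E'"
proof -
  define D where "D a j = E' a j - hh n d 0 a" for a j
  have hhn: "a \<in> {1..n} \<Longrightarrow> hh n d x a = hh n d 0 a" for a x by (simp add: hh_def)
  have st: "\<forall>a\<in>{1..n}. \<forall>j\<ge>1. \<bar>D a j - D a (j+1)\<bar> \<le> kp (Zs S T a) j \<and> even (D a j - D a (j+1) + kp (Zs S T a) j)"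
  proof (intro ballI allI impI)
    fix a j assume a: "a \<in> {1..n}" and j: "1 \<le> (j::nat)"
    have e: "Ec c S T a j - Ec c S T a (j+1) = (cnt (S a) j - cnt (T a) j) - (cnt (S a) (j+1) - cnt (T a) (j+1))"
      using hhn[OF a, of "c j"] hhn[OF a, of "c (Suc j)"] by (simp add: Ec_def)
    have "D a j - D a (j+1) = E' a j - E' a (j+1)" by (simp add: D_def)
    then show "\<bar>D a j - D a (j+1)\<bar> \<le> kp (Zs S T a) j \<and> even (D a j - D a (j+1) + kp (Zs S T a) j)"
      using step a j e Dv_step[of "S a" j "T a"] unfolding Zs_def
      by (smt (verit, best) even_add)
  qed
  obtain S' T' where S'T': "S' \<in> C" "T' \<in> C" "\<forall>a. S' a + T' a = S a + T a"
      "\<forall>a\<in>{1..n}. \<forall>j\<ge>1. cnt (S' a) j - cnt (T' a) j = D a j"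
    using realize[OF S T, of D] EJ st by (auto simp: D_def)
  have "Ec c' S' T' a j = E' a j" if "a \<le> n+1" "j \<in> {1..J}" for a j
  proof -
    have "a = 0 \<or> a \<in> {1..n} \<or> a = n+1" using that by auto
    then consider "a = 0" | "a \<in> {1..n}" | "a = n+1" by blast
    then show ?thesis
    proof cases
      case 1 then show ?thesis using bd that Ec_out0[OF S'T'(1,2)] by simp
    next
      case 2 then show ?thesis using S'T'(4) that hhn[OF 2] by (auto simp: Ec_def D_def)
    next
      case 3 then show ?thesis using bd that Ec_outn[OF S'T'(1,2)] by simp
    qed
  qed
  then have "cost (Ec c' S' T') = cost E'"
    unfolding cost_def by (intro sum.cong refl) (auto simp del: One_nat_def)
  then show ?thesis using S'T' by blast
qed

lemma rig_add: "(\<forall>a. S' a + T' a = S a + T a) \<Longrightarrow> rig S' + rig T' = rig S + rig T"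
proof -
  assume h: "\<forall>a. S' a + T' a = S a + T a"
  have "rig S' + rig T' = (\<Sum>a=1..n. sum_mset (image_mset snd (S' a + T' a)))"
    by (simp add: rig_def sum.distrib)
  also have "\<dots> = (\<Sum>a=1..n. sum_mset (image_mset snd (S a + T a)))" using h by simp
  also have "\<dots> = rig S + rig T" by (simp add: rig_def sum.distrib)
  finally show ?thesis .
qed

lemma Psi_inv: "(\<forall>a. S' a + T' a = S a + T a) \<Longrightarrow> Psi S' T' = Psi S T"
proof -
  assume h: "\<forall>a. S' a + T' a = S a + T a"
  have c: "cnt (S' a) j + cnt (T' a) j = cnt (S a) j + cnt (T a) j" for a j
    using h by (metis cnt_add)
  show ?thesis unfolding Psi_def c rig_add[OF h] ..
qed

end

lemma lip_abs: "\<bar>\<bar>x\<bar> - \<bar>y\<bar>\<bar> \<le> \<bar>x - (y::int)\<bar>"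
  by (rule abs_triangle_ineq3)
lemma par_abs: "even (\<bar>x\<bar> - \<bar>y\<bar> - (x - (y::int)))"
proof -
  have "even (\<bar>x\<bar> - x)" "even (\<bar>y\<bar> - y)" by (auto simp: abs_if)
  then have "even ((\<bar>x\<bar> - x) - (\<bar>y\<bar> - y))" by simp
  then show ?thesis by (simp add: algebra_simps)
qed
lemma sq_abs: "(\<bar>x\<bar> - \<bar>y\<bar>)^2 \<le> (x - (y::int))^2"
  using lip_abs[of x y] by (simp add: abs_le_square_iff[symmetric])
lemma lip_ref: "\<bar>(1 - \<bar>x - 1\<bar>) - (1 - \<bar>y - 1\<bar>)\<bar> \<le> \<bar>x - (y::int)\<bar>"
  using lip_abs[of "y - 1" "x - 1"] by (simp add: abs_minus_commute)
lemma par_ref: "even ((1 - \<bar>x - 1\<bar>) - (1 - \<bar>y - 1\<bar>) - (x - (y::int)))"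
proof -
  have "(1 - \<bar>x - 1\<bar>) - (1 - \<bar>y - 1\<bar>) - (x - y) = - (\<bar>x - 1\<bar> - \<bar>y - 1\<bar> - ((x - 1) - (y - 1))) - 2*(x - y)"
    by simp
  then show ?thesis using par_abs[of "x - 1" "y - 1"] by (simp, blast)
qed
lemma sq_ref: "((1 - \<bar>x - 1\<bar>) - (1 - \<bar>y - 1\<bar>))^2 \<le> (x - (y::int))^2"
  using lip_ref[of x y] by (simp only: abs_le_square_iff[symmetric])

context rc
begin

definition fL where "fL S T = (Q S - Nd S d) + (Q T + Gf T - Nd T 1 - Nd T (d-1))"
definition fK where "fK S T = (Q S + Gf S - Nd S 1 - Nd S d) + (Q T - Nd T (d-1))"
definition fR where "fR S T = (Q S + Gf S - Nd S d) + (Q T - Nd T 1 - Nd T (d-1)) - int l"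

lemma choice_len_lt: "S \<in> C \<Longrightarrow> p \<in># S a \<Longrightarrow> fst p < J"
proof -
  assume S: "S \<in> C" and p: "p \<in># S a"
  then have a: "a \<in> {1..n}" using choice_out by fastforce
  then have "p \<in># cfg a" using choice_sub[OF S a] p by (auto dest: mset_subset_eqD)
  then show ?thesis using lens a by fastforce
qed

lemma cnt_J: "S \<in> C \<Longrightarrow> J \<le> j \<Longrightarrow> cnt (S a) j = 0"
proof -
  assume S: "S \<in> C" and j: "J \<le> j"
  have "filter_mset (\<lambda>p. j \<le> fst p) (S a) = {#}"
    using choice_len_lt[OF S, of _ a] j by (auto simp: filter_mset_eq_conv) (meson leD order.strict_trans2)
  then show ?thesis by (simp add: cnt_def)
qed

lemma Ec_outn': "S \<in> C \<Longrightarrow> T \<in> C \<Longrightarrow> Ec c S T (Suc n) j = 1"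
  using Ec_outn by simp

lemma Ec_J: "S \<in> C \<Longrightarrow> T \<in> C \<Longrightarrow> a \<in> {1..n} \<Longrightarrow> J \<le> j \<Longrightarrow> Ec c S T a j = hh n d 0 a"
  by (simp add: Ec_def cnt_J hh_def)

lemma hh_01: "a \<in> {1..n} \<Longrightarrow> hh n d x a = 0 \<or> hh n d x a = 1"
  by (simp add: hh_def)

lemma exchange_map:
  fixes c c' :: "nat \<Rightarrow> int" and \<phi> :: "nat \<Rightarrow> nat \<Rightarrow> int \<Rightarrow> int"
  assumes S: "S \<in> C" and T: "T \<in> C"
    and EJ: "\<forall>a\<in>{1..n}. \<forall>j\<ge>J. \<phi> a j (Ec c S T a j) = hh n d 0 a"
    and step: "\<forall>a\<in>{1..n}. \<forall>j\<ge>1. \<bar>\<phi> a j (Ec c S T a j) - \<phi> a (j+1) (Ec c S T a (j+1))\<bar> \<le> \<bar>Ec c S T a j - Ec c S T a (j+1)\<bar>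
                 \<and> even (\<phi> a j (Ec c S T a j) - \<phi> a (j+1) (Ec c S T a (j+1)) - (Ec c S T a j - Ec c S T a (j+1)))"
    and bd: "\<forall>j\<in>{1..J}. \<phi> 0 j (c j) = c' j \<and> \<phi> (n+1) j 1 = 1"
    and hor: "\<forall>j\<in>{1..J}. \<forall>a\<in>{0..n}. (\<phi> a j (Ec c S T a j) - \<phi> (a+1) j (Ec c S T (a+1) j))^2 \<le> (Ec c S T a j - Ec c S T (a+1) j)^2"
  shows "\<exists>S' T'. S' \<in> C \<and> T' \<in> C \<and> Psi S' T' = Psi S T \<and> cost (Ec c' S' T') \<le> cost (Ec c S T)"
proof -
  define E' where "E' a j = \<phi> a j (Ec c S T a j)" for a j
  have bd': "\<forall>j\<in>{1..J}. E' 0 j = c' j \<and> E' (n+1) j = 1"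
    using bd by (simp add: E'_def Ec_out0[OF S T] Ec_outn'[OF S T])
  obtain S' T' where S'T': "S' \<in> C" "T' \<in> C" "\<forall>a. S' a + T' a = S a + T a" "cost (Ec c' S' T') = cost E'"
    using realize_E[OF S T, of E' c c'] EJ step bd' unfolding E'_def by blast
  have "cost E' \<le> cost (Ec c S T)"
    unfolding cost_def E'_def by (intro sum_mono) (use hor in auto)
  then show ?thesis using S'T' Psi_inv[OF S'T'(3)] by (intro exI[of _ S'] exI[of _ T']) auto
qed

lemma exchange_I:
  assumes S: "S \<in> C" and T: "T \<in> C"
  shows "\<exists>S' T'. S' \<in> C \<and> T' \<in> C \<and> fK S T \<le> fL S' T'"
proof -
  have "\<exists>S' T'. S' \<in> C \<and> T' \<in> C \<and> Psi S' T' = Psi S T \<and> cost (Ec cL S' T') \<le> cost (Ec cK S T)"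
  proof (rule exchange_map[OF S T, where \<phi>="\<lambda>a j x. \<bar>x\<bar>"])
    show "\<forall>a\<in>{1..n}. \<forall>j\<ge>J. \<bar>Ec cK S T a j\<bar> = hh n d 0 a"
    proof (intro ballI allI impI)
      fix a j assume "a \<in> {1..n}" "J \<le> (j::nat)"
      then show "\<bar>Ec cK S T a j\<bar> = hh n d 0 a" using Ec_J[OF S T] hh_01[of a 0] by force
    qed
    show "\<forall>a\<in>{1..n}. \<forall>j\<ge>1. \<bar>\<bar>Ec cK S T a j\<bar> - \<bar>Ec cK S T a (j+1)\<bar>\<bar> \<le> \<bar>Ec cK S T a j - Ec cK S T a (j+1)\<bar>
      \<and> even (\<bar>Ec cK S T a j\<bar> - \<bar>Ec cK S T a (j+1)\<bar> - (Ec cK S T a j - Ec cK S T a (j+1)))"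
      using lip_abs par_abs by blast
    show "\<forall>j\<in>{1..J}. \<bar>cK j\<bar> = cL j \<and> \<bar>1::int\<bar> = 1"
      by (simp add: cK_def cL_def)
    show "\<forall>j\<in>{1..J}. \<forall>a\<in>{0..n}. (\<bar>Ec cK S T a j\<bar> - \<bar>Ec cK S T (a+1) j\<bar>)^2 \<le> (Ec cK S T a j - Ec cK S T (a+1) j)^2"
      using sq_abs by blast
  qed
  then obtain S' T' where h: "S' \<in> C" "T' \<in> C" "Psi S' T' = Psi S T" "cost (Ec cL S' T') \<le> cost (Ec cK S T)"
    by blast
  have "4 * fK S T \<le> 4 * fL S' T'"
    using FK[OF S T] FL[OF h(1,2)] h(3,4) unfolding fK_def fL_def by linarith
  then show ?thesis using h by auto
qed

lemma exchange_II:
  assumes S: "S \<in> C" and T: "T \<in> C"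
  shows "\<exists>S' T'. S' \<in> C \<and> T' \<in> C \<and> fR S T \<le> fL S' T'"
proof -
  have "\<exists>S' T'. S' \<in> C \<and> T' \<in> C \<and> Psi S' T' = Psi S T \<and> cost (Ec cL S' T') \<le> cost (Ec cR S T)"
  proof (rule exchange_map[OF S T, where \<phi>="\<lambda>a j x. 1 - \<bar>x - 1\<bar>"])
    show "\<forall>a\<in>{1..n}. \<forall>j\<ge>J. 1 - \<bar>Ec cR S T a j - 1\<bar> = hh n d 0 a"
    proof (intro ballI allI impI)
      fix a j assume "a \<in> {1..n}" "J \<le> (j::nat)"
      then show "1 - \<bar>Ec cR S T a j - 1\<bar> = hh n d 0 a" using Ec_J[OF S T] hh_01[of a 0] by force
    qed
    show "\<forall>a\<in>{1..n}. \<forall>j\<ge>1. \<bar>(1 - \<bar>Ec cR S T a j - 1\<bar>) - (1 - \<bar>Ec cR S T a (j+1) - 1\<bar>)\<bar> \<le> \<bar>Ec cR S T a j - Ec cR S T a (j+1)\<bar>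
      \<and> even ((1 - \<bar>Ec cR S T a j - 1\<bar>) - (1 - \<bar>Ec cR S T a (j+1) - 1\<bar>) - (Ec cR S T a j - Ec cR S T a (j+1)))"
      using lip_ref par_ref by blast
    show "\<forall>j\<in>{1..J}. 1 - \<bar>cR j - 1\<bar> = cL j \<and> 1 - \<bar>(1::int) - 1\<bar> = 1"
      by (simp add: cR_def cL_def)
    show "\<forall>j\<in>{1..J}. \<forall>a\<in>{0..n}. ((1 - \<bar>Ec cR S T a j - 1\<bar>) - (1 - \<bar>Ec cR S T (a+1) j - 1\<bar>))^2 \<le> (Ec cR S T a j - Ec cR S T (a+1) j)^2"
      using sq_ref by blast
  qed
  then obtain S' T' where h: "S' \<in> C" "T' \<in> C" "Psi S' T' = Psi S T" "cost (Ec cL S' T') \<le> cost (Ec cR S T)"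
    by blast
  have "4 * fR S T \<le> 4 * fL S' T'"
    using FR[OF S T] FL[OF h(1,2)] h(3,4) unfolding fR_def fL_def by linarith
  then show ?thesis using h by auto
qed

end

definition pt :: "int \<times> int \<Rightarrow> real^2" where
  "pt p = vector [real_of_int (fst p), real_of_int (snd p)]"

definition adjz :: "int \<times> int \<Rightarrow> int \<times> int \<Rightarrow> bool" where
  "adjz p q \<longleftrightarrow> \<bar>fst p - fst q\<bar> + \<bar>snd p - snd q\<bar> \<le> 1"

definition segs :: "(int \<times> int) set \<Rightarrow> (real^2) set" where
  "segs U = \<Union>{closed_segment (pt p) (pt q) | p q. p \<in> U \<and> q \<in> U \<and> adjz p q}"

definition RR :: "(int \<times> int) set \<Rightarrow> int \<times> int \<Rightarrow> int \<times> int \<Rightarrow> bool" where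
  "RR U p q \<longleftrightarrow> p \<in> U \<and> q \<in> U \<and> adjz p q"

lemma pt_1[simp]: "pt p $ 1 = real_of_int (fst p)" and pt_2[simp]: "pt p $ 2 = real_of_int (snd p)"
  by (simp_all add: pt_def)

lemma path_of_rtrancl:
  assumes "(RR U)\<^sup>*\<^sup>* x y" "x \<in> U"
  shows "\<exists>g. path g \<and> pathstart g = pt x \<and> pathfinish g = pt y \<and> path_image g \<subseteq> segs U"
  using assms
proof (induction rule: rtranclp_induct)
  case base
  have "closed_segment (pt x) (pt x) \<in> {closed_segment (pt p) (pt q) | p q. p \<in> U \<and> q \<in> U \<and> adjz p q}"
    using base by (rule_tac CollectI, rule_tac exI[of _ x], rule_tac exI[of _ x]) (simp add: adjz_def)
  then have "closed_segment (pt x) (pt x) \<subseteq> segs U"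
    unfolding segs_def by (rule Union_upper)
  then show ?case
    by (intro exI[of _ "linepath (pt x) (pt x)"]) (simp only: path_linepath pathstart_linepath pathfinish_linepath path_image_linepath simp_thms)
next
  case (step y z)
  then obtain g where g: "path g" "pathstart g = pt x" "pathfinish g = pt y" "path_image g \<subseteq> segs U" by blast
  have "closed_segment (pt y) (pt z) \<in> {closed_segment (pt p) (pt q) | p q. p \<in> U \<and> q \<in> U \<and> adjz p q}"
    using step(2) unfolding RR_def by (rule_tac CollectI, rule_tac exI[of _ y], rule_tac exI[of _ z]) simp
  then have "closed_segment (pt y) (pt z) \<subseteq> segs U"
    unfolding segs_def by (rule Union_upper)
  moreover have "path (g +++ linepath (pt y) (pt z))"
    using g(1,3) by (intro path_join_imp) auto
  moreover have "path_image (g +++ linepath (pt y) (pt z)) = path_image g \<union> closed_segment (pt y) (pt z)"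
    using g(3) by (simp add: path_image_join)
  ultimately show ?case using g(2,4)
    by (intro exI[of _ "g +++ linepath (pt y) (pt z)"]) simp
qed

lemma int_between: fixes a c x :: int assumes "\<bar>a - c\<bar> \<le> 1" "min a c \<le> x" "x \<le> max a c" shows "x = a \<or> x = c"
proof (cases "a \<le> c")
  case True
  then have "a \<le> x" "x \<le> c" "c \<le> a + 1" using assms by (auto simp: min_def max_def)
  then show ?thesis by presburger
next
  case False
  then have "c \<le> x" "x \<le> a" "a \<le> c + 1" using assms by (auto simp: min_def max_def)
  then show ?thesis by presburger
qed

lemma conv_between: fixes t u v :: real assumes "0 \<le> t" "t \<le> 1"
  shows "min u v \<le> (1 - t) * u + t * v \<and> (1 - t) * u + t * v \<le> max u v"
proof -
  have e: "(1 - t) * u + t * v = u + t * (v - u)" by (simp add: algebra_simps)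
  show ?thesis
  proof (cases "u \<le> v")
    case True
    have "0 \<le> t * (v - u)" using True assms by simp
    moreover have "t * (v - u) \<le> v - u" using True assms by (simp add: mult_left_le_one_le)
    ultimately show ?thesis using True e by (simp add: min_def max_def split: if_splits)
  next
    case False
    have "t * (u - v) \<ge> 0" using False assms by simp
    moreover have "t * (u - v) \<le> u - v" using False assms by (simp add: mult_left_le_one_le)
    ultimately show ?thesis using False e by (simp add: min_def max_def algebra_simps)
  qed
qed

lemma seg_coord:
  assumes "z \<in> closed_segment (u::real^2) v"
  shows "min (u$k) (v$k) \<le> z$k \<and> z$k \<le> max (u$k) (v$k)"
proof -
  obtain t where t: "0 \<le> t" "t \<le> 1" "z = (1 - t) *\<^sub>R u + t *\<^sub>R v" using assms by (auto simp: in_segment)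
  have "z$k = (1 - t) * u$k + t * v$k" using t(3) by simp
  moreover have "min (u$k) (v$k) \<le> (1 - t) * u$k + t * v$k \<and> (1 - t) * u$k + t * v$k \<le> max (u$k) (v$k)"
    using conv_between[OF t(1,2)] by blast
  ultimately show ?thesis by simp
qed

lemma lattice_in_seg:
  fixes x y :: int
  assumes "adjz p q" "min (fst p) (fst q) \<le> x" "x \<le> max (fst p) (fst q)"
    "min (snd p) (snd q) \<le> y" "y \<le> max (snd p) (snd q)"
  shows "(x, y) = p \<or> (x, y) = q"
proof -
  obtain a b c e where pq: "p = (a, b)" "q = (c, e)" by (cases p, cases q) auto
  have h: "\<bar>a - c\<bar> + \<bar>b - e\<bar> \<le> 1" using assms(1) pq by (simp add: adjz_def)
  have m: "min a c \<le> x" "x \<le> max a c" "min b e \<le> y" "y \<le> max b e" using assms(2-5) pq by auto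
  show ?thesis
  proof (cases "a = c")
    case True
    then have "x = a" using m by simp
    moreover have "y = b \<or> y = e" using h m True int_between[of b e y] by simp
    ultimately show ?thesis using pq True by auto
  next
    case False
    then have "b = e" using h by linarith
    then have "y = b" using m by simp
    moreover have "x = a \<or> x = c" using h m \<open>b = e\<close> int_between[of a c x] by simp
    ultimately show ?thesis using pq \<open>b = e\<close> by auto
  qed
qed

lemma seg_meet:
  assumes pq: "adjz p q" and pq': "adjz p' q'"
    and z1: "z \<in> closed_segment (pt p) (pt q)" and z2: "z \<in> closed_segment (pt p') (pt q')"
  shows "\<exists>w. (w = p \<or> w = q) \<and> (w = p' \<or> w = q')"
proof -
  have c1: "real_of_int (min (fst p) (fst q)) \<le> z$1 \<and> z$1 \<le> real_of_int (max (fst p) (fst q))"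
    using seg_coord[OF z1, of 1] by (simp add: min_def max_def split: if_splits)
  have c2: "real_of_int (min (snd p) (snd q)) \<le> z$2 \<and> z$2 \<le> real_of_int (max (snd p) (snd q))"
    using seg_coord[OF z1, of 2] by (simp add: min_def max_def split: if_splits)
  have c3: "real_of_int (min (fst p') (fst q')) \<le> z$1 \<and> z$1 \<le> real_of_int (max (fst p') (fst q'))"
    using seg_coord[OF z2, of 1] by (simp add: min_def max_def split: if_splits)
  have c4: "real_of_int (min (snd p') (snd q')) \<le> z$2 \<and> z$2 \<le> real_of_int (max (snd p') (snd q'))"
    using seg_coord[OF z2, of 2] by (simp add: min_def max_def split: if_splits)
  define w1 where "w1 = max (min (fst p) (fst q)) (min (fst p') (fst q'))"
  define w2 where "w2 = max (min (snd p) (snd q)) (min (snd p') (snd q'))"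
  have "w1 \<le> max (fst p) (fst q)" "w1 \<le> max (fst p') (fst q')"
    using c1 c3 unfolding w1_def by linarith+
  moreover have "w2 \<le> max (snd p) (snd q)" "w2 \<le> max (snd p') (snd q')"
    using c2 c4 unfolding w2_def by linarith+
  moreover have "min (fst p) (fst q) \<le> w1" "min (fst p') (fst q') \<le> w1"
    "min (snd p) (snd q) \<le> w2" "min (snd p') (snd q') \<le> w2" unfolding w1_def w2_def by auto
  ultimately have "((w1, w2) = p \<or> (w1, w2) = q) \<and> ((w1, w2) = p' \<or> (w1, w2) = q')"
    using lattice_in_seg[OF pq] lattice_in_seg[OF pq'] by blast
  then show ?thesis by blast
qed

lemma segs_disjoint:
  assumes "U \<inter> W = {}"
  shows "segs U \<inter> segs W = {}"
proof (rule ccontr)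
  assume "segs U \<inter> segs W \<noteq> {}"
  then obtain z p q p' q' where "p \<in> U" "q \<in> U" "adjz p q" "z \<in> closed_segment (pt p) (pt q)"
    "p' \<in> W" "q' \<in> W" "adjz p' q'" "z \<in> closed_segment (pt p') (pt q')"
    unfolding segs_def by blast
  then show False using seg_meet assms by blast
qed

lemma segs_box:
  assumes "\<forall>p\<in>U. x0 \<le> fst p \<and> fst p \<le> x1 \<and> y0 \<le> snd p \<and> snd p \<le> y1"
  shows "segs U \<subseteq> cbox (vector [real_of_int x0, real_of_int y0]) (vector [real_of_int x1, real_of_int y1])"
proof -
  have inbox: "pt p \<in> cbox (vector [real_of_int x0, real_of_int y0]) (vector [real_of_int x1, real_of_int y1])" if "p \<in> U" for p
    using assms that by (auto simp: mem_box_cart forall_2)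
  show ?thesis
  proof
    fix z assume "z \<in> segs U"
    then obtain p q where pq: "p \<in> U" "q \<in> U" "z \<in> closed_segment (pt p) (pt q)" unfolding segs_def by blast
    then show "z \<in> cbox (vector [real_of_int x0, real_of_int y0]) (vector [real_of_int x1, real_of_int y1])"
      using closed_segment_subset[OF inbox[OF pq(1)] inbox[OF pq(2)] convex_box(1)] by blast
  qed
qed

lemma crossing:
  assumes disj: "U \<inter> W = {}"
    and Ubox: "\<forall>p\<in>U. x0 \<le> fst p \<and> fst p \<le> x1 \<and> y0 \<le> snd p \<and> snd p \<le> y1"
    and Wbox: "\<forall>p\<in>W. x0 \<le> fst p \<and> fst p \<le> x1 \<and> y0 \<le> snd p \<and> snd p \<le> y1"
    and pU: "(RR U)\<^sup>*\<^sup>* (x0, yL) (x1, yR)" "(x0, yL) \<in> U"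
    and pW: "(RR W)\<^sup>*\<^sup>* (xB, y0) (xT, y1)" "(xB, y0) \<in> W"
  shows False
proof -
  obtain f where f: "path f" "pathstart f = pt (x0, yL)" "pathfinish f = pt (x1, yR)" "path_image f \<subseteq> segs U"
    using path_of_rtrancl[OF pU] by blast
  obtain g where g: "path g" "pathstart g = pt (xB, y0)" "pathfinish g = pt (xT, y1)" "path_image g \<subseteq> segs W"
    using path_of_rtrancl[OF pW] by blast
  define A where "A = (vector [real_of_int x0, real_of_int y0] :: real^2)"
  define B where "B = (vector [real_of_int x1, real_of_int y1] :: real^2)"
  have a1: "path_image f \<subseteq> cbox A B" using f(4) segs_box[OF Ubox] unfolding A_def B_def by blast
  have a2: "path_image g \<subseteq> cbox A B" using g(4) segs_box[OF Wbox] unfolding A_def B_def by blast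
  have a3: "pathstart f $ 1 = A $ 1" "pathfinish f $ 1 = B $ 1" "pathstart g $ 2 = A $ 2" "pathfinish g $ 2 = B $ 2"
    using f(2,3) g(2,3) unfolding A_def B_def by simp_all
  obtain z where "z \<in> path_image f" "z \<in> path_image g"
    by (rule fashoda[OF f(1) g(1) a1 a2 a3])
  then show False using f(4) g(4) segs_disjoint[OF disj] by blast
qed

lemma key_ineq: "(a::int) * b \<le> 0 \<Longrightarrow> \<bar>a + b\<bar> \<le> \<bar>a - b\<bar>"
proof -
  assume "a * b \<le> 0"
  then have "(a + b)^2 \<le> (a - b)^2" by (simp add: power2_eq_square algebra_simps)
  then show ?thesis by (simp only: abs_le_square_iff[symmetric])
qed

lemma refl_pair:
  fixes x y v :: int
  assumes "(x - v) * (y - v) \<le> 0"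
  shows "\<bar>(2 * v - x) - y\<bar> \<le> \<bar>x - y\<bar>"
  using key_ineq[OF assms] by (simp add: algebra_simps)

lemma adjz_sym: "adjz p q \<Longrightarrow> adjz q p"
  by (auto simp: adjz_def abs_minus_commute)

context rc
begin

definition Ez where "Ez c S T p = Ec c S T (nat (fst p)) (nat (snd p))"
definition ingrid where "ingrid p \<longleftrightarrow> 0 \<le> fst p \<and> fst p \<le> int n + 1 \<and> 1 \<le> snd p \<and> snd p \<le> int J"
definition phiX where "phiX X v a j x = (if (int a, int j) \<in> X then 2 * v - x else x)"

lemma region_pair:
  fixes X :: "(int \<times> int) set" and v :: int
  assumes Xbd: "\<forall>p\<in>X. \<forall>q. adjz p q \<and> q \<notin> X \<and> ingrid q \<longrightarrow> (Ez c S T p - v) * (Ez c S T q - v) \<le> 0"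
    and Xgrid: "\<forall>p\<in>X. ingrid p"
    and adj: "adjz (int a, int j) (int b, int i)" and g1: "ingrid (int a, int j)" and g2: "ingrid (int b, int i)"
  shows "\<bar>phiX X v a j (Ec c S T a j) - phiX X v b i (Ec c S T b i)\<bar> \<le> \<bar>Ec c S T a j - Ec c S T b i\<bar>
     \<and> even (phiX X v a j (Ec c S T a j) - phiX X v b i (Ec c S T b i) - (Ec c S T a j - Ec c S T b i))"
proof -
  let ?x = "Ec c S T a j" and ?y = "Ec c S T b i"
  have ex: "Ez c S T (int a, int j) = ?x" "Ez c S T (int b, int i) = ?y" by (simp_all add: Ez_def)
  consider "(int a, int j) \<in> X" "(int b, int i) \<in> X" | "(int a, int j) \<notin> X" "(int b, int i) \<notin> X"
    | "(int a, int j) \<in> X" "(int b, int i) \<notin> X" | "(int a, int j) \<notin> X" "(int b, int i) \<in> X" by blast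
  then show ?thesis
  proof cases
    case 1 then show ?thesis by (simp add: phiX_def abs_minus_commute algebra_simps)
  next
    case 2 then show ?thesis by (simp add: phiX_def)
  next
    case 3
    have "(?x - v) * (?y - v) \<le> 0" using Xbd 3 adj g2 ex by metis
    then show ?thesis using 3 refl_pair[of ?x v ?y] by (simp add: phiX_def algebra_simps)
  next
    case 4
    have "(?y - v) * (?x - v) \<le> 0" using Xbd 4 adjz_sym[OF adj] g1 ex by metis
    then have "(?y - v) * (?x - v) \<le> 0" .
    then have "\<bar>(2 * v - ?y) - ?x\<bar> \<le> \<bar>?y - ?x\<bar>" by (rule refl_pair)
    then show ?thesis using 4 by (simp add: phiX_def abs_minus_commute algebra_simps)
  qed
qed

lemma region_exchange:
  fixes X :: "(int \<times> int) set" and v :: int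
  assumes S: "S \<in> C" and T: "T \<in> C"
    and Xbd: "\<forall>p\<in>X. \<forall>q. adjz p q \<and> q \<notin> X \<and> ingrid q \<longrightarrow> (Ez c S T p - v) * (Ez c S T q - v) \<le> 0"
    and Xgrid: "\<forall>p\<in>X. ingrid p"
    and XJ: "\<forall>a\<in>{1..n}. (int a, int J) \<notin> X"
    and Xn: "\<forall>j\<in>{1..J}. (int (n+1), int j) \<notin> X"
    and b0: "\<forall>j\<in>{1..J}. phiX X v 0 j (c j) = c' j"
  shows "\<exists>S' T'. S' \<in> C \<and> T' \<in> C \<and> Psi S' T' = Psi S T \<and> cost (Ec c' S' T') \<le> cost (Ec c S T)"
proof (rule exchange_map[OF S T, where \<phi>="phiX X v"])
  have out: "(int a, int j) \<notin> X" if "a \<in> {1..n}" "J \<le> j" for a j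
  proof (cases "j = J")
    case True then show ?thesis using XJ that by simp
  next
    case False
    then have "\<not> ingrid (int a, int j)" using that by (simp add: ingrid_def)
    then show ?thesis using Xgrid by blast
  qed
  show "\<forall>a\<in>{1..n}. \<forall>j\<ge>J. phiX X v a j (Ec c S T a j) = hh n d 0 a"
    using out Ec_J[OF S T] by (simp add: phiX_def)
  show "\<forall>a\<in>{1..n}. \<forall>j\<ge>1. \<bar>phiX X v a j (Ec c S T a j) - phiX X v a (j+1) (Ec c S T a (j+1))\<bar> \<le> \<bar>Ec c S T a j - Ec c S T a (j+1)\<bar>
      \<and> even (phiX X v a j (Ec c S T a j) - phiX X v a (j+1) (Ec c S T a (j+1)) - (Ec c S T a j - Ec c S T a (j+1)))"
  proof (intro ballI allI impI)
    fix a j assume a: "a \<in> {1..n}" and j: "1 \<le> (j::nat)"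
    show "\<bar>phiX X v a j (Ec c S T a j) - phiX X v a (j+1) (Ec c S T a (j+1))\<bar> \<le> \<bar>Ec c S T a j - Ec c S T a (j+1)\<bar>
      \<and> even (phiX X v a j (Ec c S T a j) - phiX X v a (j+1) (Ec c S T a (j+1)) - (Ec c S T a j - Ec c S T a (j+1)))"
    proof (cases "j + 1 \<le> J")
      case True
      have "adjz (int a, int j) (int a, int (j+1))" by (simp add: adjz_def)
      moreover have "ingrid (int a, int j)" "ingrid (int a, int (j+1))" using a j True by (auto simp: ingrid_def)
      ultimately show ?thesis using region_pair[OF Xbd Xgrid] by blast
    next
      case False
      then have "(int a, int j) \<notin> X" "(int a, int (j+1)) \<notin> X" using out[OF a, of j] out[OF a, of "j+1"] by auto
      then show ?thesis by (simp add: phiX_def)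
    qed
  qed
  show "\<forall>j\<in>{1..J}. phiX X v 0 j (c j) = c' j \<and> phiX X v (n+1) j 1 = 1"
    using b0 Xn by (simp add: phiX_def)
  show "\<forall>j\<in>{1..J}. \<forall>a\<in>{0..n}. (phiX X v a j (Ec c S T a j) - phiX X v (a+1) j (Ec c S T (a+1) j))^2 \<le> (Ec c S T a j - Ec c S T (a+1) j)^2"
  proof (intro ballI)
    fix j a assume j: "j \<in> {1..J}" and a: "a \<in> {0..n}"
    have "adjz (int a, int j) (int (a+1), int j)" by (simp add: adjz_def)
    moreover have "ingrid (int a, int j)" "ingrid (int (a+1), int j)" using a j by (auto simp: ingrid_def)
    ultimately have "\<bar>phiX X v a j (Ec c S T a j) - phiX X v (a+1) j (Ec c S T (a+1) j)\<bar> \<le> \<bar>Ec c S T a j - Ec c S T (a+1) j\<bar>"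
      using region_pair[OF Xbd Xgrid] by blast
    then show "(phiX X v a j (Ec c S T a j) - phiX X v (a+1) j (Ec c S T (a+1) j))^2 \<le> (Ec c S T a j - Ec c S T (a+1) j)^2"
      by (simp only: abs_le_square_iff[symmetric])
  qed
qed

end

lemma RR_sym: "(RR U)\<^sup>*\<^sup>* p q \<Longrightarrow> (RR U)\<^sup>*\<^sup>* q p"
proof (induction rule: rtranclp_induct)
  case base then show ?case by simp
next
  case (step y z)
  have "RR U z y" using step(2) by (auto simp: RR_def adjz_sym)
  then show ?case using step(3) by (rule converse_rtranclp_into_rtranclp)
qed

lemma RR_mono: "U \<subseteq> U' \<Longrightarrow> (RR U)\<^sup>*\<^sup>* p q \<Longrightarrow> (RR U')\<^sup>*\<^sup>* p q"
proof -
  assume "U \<subseteq> U'" "(RR U)\<^sup>*\<^sup>* p q"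
  moreover have "RR U \<le> RR U'" using \<open>U \<subseteq> U'\<close> by (auto simp: RR_def)
  ultimately show ?thesis using rtranclp_mono by blast
qed

lemma RR_row: "(\<forall>k\<le>m. (x0 + int k, y) \<in> U) \<Longrightarrow> (RR U)\<^sup>*\<^sup>* (x0, y) (x0 + int m, y)"
proof (induction m)
  case 0 then show ?case by simp
next
  case (Suc m)
  then have "(RR U)\<^sup>*\<^sup>* (x0, y) (x0 + int m, y)" by simp
  moreover have "RR U (x0 + int m, y) (x0 + int (Suc m), y)"
    using Suc.prems by (auto simp: RR_def adjz_def)
  ultimately show ?case by (rule rtranclp.rtrancl_into_rtrancl)
qed

lemma RR_col: "(\<forall>k\<le>m. (x, y0 + int k) \<in> U) \<Longrightarrow> (RR U)\<^sup>*\<^sup>* (x, y0) (x, y0 + int m)"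
proof (induction m)
  case 0 then show ?case by simp
next
  case (Suc m)
  then have "(RR U)\<^sup>*\<^sup>* (x, y0) (x, y0 + int m)" by simp
  moreover have "RR U (x, y0 + int m) (x, y0 + int (Suc m))"
    using Suc.prems by (auto simp: RR_def adjz_def)
  ultimately show ?case by (rule rtranclp.rtrancl_into_rtrancl)
qed

lemma RR_row': "x0 \<le> x1 \<Longrightarrow> (\<forall>x. x0 \<le> x \<and> x \<le> x1 \<longrightarrow> (x, y) \<in> U) \<Longrightarrow> (RR U)\<^sup>*\<^sup>* (x0, y) (x1, y)"
  using RR_row[of "nat (x1 - x0)" x0 y U] by auto

lemma RR_col': "y0 \<le> y1 \<Longrightarrow> (\<forall>y. y0 \<le> y \<and> y \<le> y1 \<longrightarrow> (x, y) \<in> U) \<Longrightarrow> (RR U)\<^sup>*\<^sup>* (x, y0) (x, y1)"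
  using RR_col[of "nat (y1 - y0)" x y0 U] by auto

lemma RR_in: "(RR U)\<^sup>*\<^sup>* p q \<Longrightarrow> p \<in> U \<Longrightarrow> q \<in> U"
  by (induction rule: rtranclp_induct) (auto simp: RR_def)

context rc
begin

lemma Ez0: "S \<in> C \<Longrightarrow> T \<in> C \<Longrightarrow> 0 \<le> y \<Longrightarrow> Ez c S T (0, y) = c (nat y)"
  by (simp add: Ez_def Ec_out0)

lemma Ezn: "S \<in> C \<Longrightarrow> T \<in> C \<Longrightarrow> Ez c S T (int n + 1, y) = 1"
proof -
  assume "S \<in> C" "T \<in> C"
  moreover have "nat (int n + 1) = Suc n" by simp
  ultimately show ?thesis by (simp add: Ez_def Ec_outn')
qed

lemma EzJ: "S \<in> C \<Longrightarrow> T \<in> C \<Longrightarrow> 1 \<le> x \<Longrightarrow> x \<le> int n \<Longrightarrow> Ez c S T (x, int J) = (if int d \<le> x then 1 else 0)"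
proof -
  assume S: "S \<in> C" and T: "T \<in> C" and x: "1 \<le> x" "x \<le> int n"
  then have "nat x \<in> {1..n}" by auto
  then have "Ec c S T (nat x) J = hh n d 0 (nat x)" using Ec_J[OF S T] by simp
  then show ?thesis using x by (auto simp: Ez_def hh_def)
qed

lemma exchange_III:
  assumes S: "S \<in> C" and T: "T \<in> C"
  shows "\<exists>S' T'. S' \<in> C \<and> T' \<in> C \<and> (fL S T \<le> fK S' T' \<or> fL S T \<le> fR S' T')"
proof -
  let ?E = "Ez cL S T"
  define Uz where "Uz = {p. ingrid p \<and> ?E p \<ge> 1}"
  define Wz where "Wz = {p. ingrid p \<and> ?E p \<le> 0}"
  define A where "A = {p. (RR Uz)\<^sup>*\<^sup>* (0, int J) p}"
  define B where "B = {p. (RR Wz)\<^sup>*\<^sup>* (0, 1) p}"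
  have E0: "?E (0, y) = cL (nat y)" if "0 \<le> y" for y using Ez0[OF S T that] .
  have En: "?E (int n + 1, y) = 1" for y using Ezn[OF S T] .
  have EJ: "?E (x, int J) = (if int d \<le> x then 1 else 0)" if "1 \<le> x" "x \<le> int n" for x
    using EzJ[OF S T that] .
  have lJ': "l < J" using lJ .
  have J1: "1 \<le> J" using lJ l1 by simp
  have startU: "(0, int J) \<in> Uz" unfolding Uz_def using E0[of "int J"] lJ n1 J1 by (simp add: ingrid_def cL_def)
  have startW: "(0, 1) \<in> Wz" unfolding Wz_def using E0[of 1] l1 n1 J1 by (simp add: ingrid_def cL_def)
  have AU: "A \<subseteq> Uz" unfolding A_def using RR_in startU by blast
  have BW: "B \<subseteq> Wz" unfolding B_def using RR_in startW by blast
  have Aclos: "q \<in> A" if "p \<in> A" "(RR Uz)\<^sup>*\<^sup>* p q" for p q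
    using that unfolding A_def by auto
  have Bclos: "q \<in> B" if "p \<in> B" "(RR Wz)\<^sup>*\<^sup>* p q" for p q
    using that unfolding B_def by auto
  have UW: "Uz \<inter> Wz = {}" unfolding Uz_def Wz_def by auto
  have col0U: "(0, y) \<in> Uz" if "int l < y" "y \<le> int J" for y
    unfolding Uz_def using that E0[of y] by (auto simp: ingrid_def cL_def)
  have col0W: "(0, y) \<in> Wz" if "1 \<le> y" "y \<le> int l" for y
    unfolding Wz_def using that E0[of y] lJ by (auto simp: ingrid_def cL_def)
  have colnU: "(int n + 1, y) \<in> Uz" if "1 \<le> y" "y \<le> int J" for y
    unfolding Uz_def using that En[of y] by (auto simp: ingrid_def)
  have rowJU: "(x, int J) \<in> Uz" if "int d \<le> x" "x \<le> int n + 1" for x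
  proof (cases "x = int n + 1")
    case True then show ?thesis using colnU J1 by simp
  next
    case False
    then have "?E (x, int J) = 1" using EJ[of x] that d2 by auto
    then show ?thesis unfolding Uz_def using that d2 J1 by (auto simp: ingrid_def)
  qed
  have rowJW: "(x, int J) \<in> Wz" if "1 \<le> x" "x < int d" for x
  proof -
    have "?E (x, int J) = 0" using EJ[of x] that dn by auto
    then show ?thesis unfolding Wz_def using that dn J1 by (auto simp: ingrid_def)
  qed
  have Xbd_gen: "\<forall>p\<in>X. \<forall>q. adjz p q \<and> q \<notin> X \<and> ingrid q \<longrightarrow> (?E p - v) * (?E q - v) \<le> 0"
    if XY: "X \<subseteq> Y" and clos: "\<And>p q. p \<in> X \<Longrightarrow> RR Y p q \<Longrightarrow> q \<in> X"
      and Yd: "Y = {p. ingrid p \<and> (?E p - v) * s \<ge> 1}" and s: "s = 1 \<or> s = -1" for X Y v s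
  proof (intro ballI allI impI)
    fix p q assume p: "p \<in> X" and h: "adjz p q \<and> q \<notin> X \<and> ingrid q"
    have pY: "p \<in> Y" using p XY by blast
    have "q \<notin> Y"
    proof
      assume "q \<in> Y"
      then have "RR Y p q" using pY h by (simp add: RR_def)
      then show False using clos[OF p] h by blast
    qed
    then have "(?E q - v) * s \<le> 0" using h Yd by auto
    moreover have "(?E p - v) * s \<ge> 1" using pY Yd by auto
    ultimately show "(?E p - v) * (?E q - v) \<le> 0" using s
      by (auto simp: mult_nonneg_nonpos mult_nonpos_nonneg)
  qed
  show ?thesis
  proof (cases "(int d, int J) \<in> A")
    case False
    have XJ: "\<forall>a\<in>{1..n}. (int a, int J) \<notin> A"
    proof (intro ballI notI)
      fix a assume a: "a \<in> {1..n}" and aA: "(int a, int J) \<in> A"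
      show False
      proof (cases "d \<le> a")
        case True
        have "(RR Uz)\<^sup>*\<^sup>* (int d, int J) (int a, int J)"
          by (rule RR_row') (use True a rowJU in auto)
        then have "(int d, int J) \<in> A" using Aclos[OF aA] RR_sym by blast
        then show False using False by simp
      next
        case False
        then have "(int a, int J) \<in> Wz" using rowJW a by auto
        then show False using aA AU UW by blast
      qed
    qed
    have Xn: "\<forall>j\<in>{1..J}. (int (n+1), int j) \<notin> A"
    proof (intro ballI notI)
      fix j assume j: "j \<in> {1..J}" and jA: "(int (n+1), int j) \<in> A"
      have "(RR Uz)\<^sup>*\<^sup>* (int n + 1, int j) (int n + 1, int J)"
        by (rule RR_col') (use j colnU in auto)
      moreover have "(RR Uz)\<^sup>*\<^sup>* (int d, int J) (int n + 1, int J)"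
        by (rule RR_row') (use dn rowJU in auto)
      ultimately have "(RR Uz)\<^sup>*\<^sup>* (int n + 1, int j) (int d, int J)" using RR_sym by (meson rtranclp_trans)
      moreover have jA': "(int n + 1, int j) \<in> A"
      proof -
        have e: "int (n+1) = int n + 1" by simp
        show ?thesis using jA by (simp only: e)
      qed
      ultimately have "(int d, int J) \<in> A" using Aclos by blast
      then show False using False by simp
    qed
    have b0: "\<forall>j\<in>{1..J}. phiX A 0 0 j (cL j) = cK j"
    proof
      fix j assume j: "j \<in> {1..J}"
      show "phiX A 0 0 j (cL j) = cK j"
      proof (cases "l < j")
        case True
        have "(RR Uz)\<^sup>*\<^sup>* (0, int j) (0, int J)"
          by (rule RR_col') (use j True col0U in auto)
        then have "(0, int j) \<in> A" unfolding A_def using RR_sym by blast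
        then show ?thesis using True by (simp add: phiX_def cL_def cK_def)
      next
        case False
        then have "(0, int j) \<in> Wz" using col0W j by auto
        then have "(0, int j) \<notin> A" using AU UW by blast
        then show ?thesis using False by (simp add: phiX_def cL_def cK_def)
      qed
    qed
    have Abd: "\<forall>p\<in>A. \<forall>q. adjz p q \<and> q \<notin> A \<and> ingrid q \<longrightarrow> (?E p - 0) * (?E q - 0) \<le> 0"
    proof (rule Xbd_gen[of A Uz 0 1])
      show "A \<subseteq> Uz" by (rule AU)
      show "\<And>p q. p \<in> A \<Longrightarrow> RR Uz p q \<Longrightarrow> q \<in> A" using Aclos r_into_rtranclp by metis
      show "Uz = {p. ingrid p \<and> (?E p - 0) * 1 \<ge> 1}" unfolding Uz_def by simp
    qed simp
    have Agrid: "\<forall>p\<in>A. ingrid p" using AU unfolding Uz_def by blast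
    obtain S' T' where h: "S' \<in> C" "T' \<in> C" "Psi S' T' = Psi S T" "cost (Ec cK S' T') \<le> cost (Ec cL S T)"
      using region_exchange[OF S T _ Agrid XJ _ b0] Abd Xn unfolding Ez_def by fastforce
    have "4 * fL S T \<le> 4 * fK S' T'"
      using FL[OF S T] FK[OF h(1,2)] h(3,4) unfolding fK_def fL_def by linarith
    then show ?thesis using h by auto
  next
    case True
    have notB: "(int d - 1, int J) \<notin> B"
    proof
      assume dB: "(int d - 1, int J) \<in> B"
      define U' where "U' = Uz \<union> {(-1, int J), (int n + 2, int J)}"
      define W' where "W' = Wz \<union> {(0, 0), (int d - 1, int J + 1)}"
      have disj: "U' \<inter> W' = {}" using UW unfolding U'_def W'_def Uz_def Wz_def by (auto simp: ingrid_def)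
      have Ubox: "\<forall>p\<in>U'. -1 \<le> fst p \<and> fst p \<le> int n + 2 \<and> 0 \<le> snd p \<and> snd p \<le> int J + 1"
        unfolding U'_def Uz_def using dn by (auto simp: ingrid_def)
      have Wbox: "\<forall>p\<in>W'. -1 \<le> fst p \<and> fst p \<le> int n + 2 \<and> 0 \<le> snd p \<and> snd p \<le> int J + 1"
        unfolding W'_def Wz_def using dn by (auto simp: ingrid_def)
      have UU': "Uz \<subseteq> U'" unfolding U'_def by blast
      have WW': "Wz \<subseteq> W'" unfolding W'_def by blast
      have p1: "(RR U')\<^sup>*\<^sup>* (0, int J) (int d, int J)"
        using True unfolding A_def by (auto intro: RR_mono[OF UU'])
      have "(RR Uz)\<^sup>*\<^sup>* (int d, int J) (int n + 1, int J)"
        by (rule RR_row') (use dn rowJU in auto)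
      then have p2: "(RR U')\<^sup>*\<^sup>* (int d, int J) (int n + 1, int J)"
        by (rule RR_mono[OF UU'])
      have p0: "RR U' (-1, int J) (0, int J)" using startU unfolding U'_def by (auto simp: RR_def adjz_def)
      have p3: "RR U' (int n + 1, int J) (int n + 2, int J)"
        using colnU J1 unfolding U'_def by (auto simp: RR_def adjz_def)
      have pU: "(RR U')\<^sup>*\<^sup>* (-1, int J) (int n + 2, int J)"
        using p0 p1 p2 p3 by (meson converse_rtranclp_into_rtranclp rtranclp.rtrancl_into_rtrancl rtranclp_trans)
      have q1: "(RR W')\<^sup>*\<^sup>* (0, 1) (int d - 1, int J)"
        using dB unfolding B_def by (auto intro: RR_mono[OF WW'])
      have q0: "RR W' (0, 0) (0, 1)" using startW unfolding W'_def by (auto simp: RR_def adjz_def)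
      have q2: "RR W' (int d - 1, int J) (int d - 1, int J + 1)"
        using rowJW[of "int d - 1"] d2 unfolding W'_def by (auto simp: RR_def adjz_def)
      have pW: "(RR W')\<^sup>*\<^sup>* (0, 0) (int d - 1, int J + 1)"
        using q0 q1 q2 by (meson converse_rtranclp_into_rtranclp rtranclp.rtrancl_into_rtrancl)
      show False
        by (rule crossing[OF disj Ubox Wbox pU _ pW]) (auto simp: U'_def W'_def)
    qed
    have XJ: "\<forall>a\<in>{1..n}. (int a, int J) \<notin> B"
    proof (intro ballI notI)
      fix a assume a: "a \<in> {1..n}" and aB: "(int a, int J) \<in> B"
      show False
      proof (cases "a < d")
        case True
        have "(RR Wz)\<^sup>*\<^sup>* (int a, int J) (int d - 1, int J)"
          by (rule RR_row') (use True a rowJW in auto)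
        then have "(int d - 1, int J) \<in> B" using Bclos[OF aB] by blast
        then show False using notB by simp
      next
        case False
        then have "(int a, int J) \<in> Uz" using rowJU a by auto
        then show False using aB BW UW by blast
      qed
    qed
    have Xn: "\<forall>j\<in>{1..J}. (int (n+1), int j) \<notin> B"
    proof (intro ballI notI)
      fix j assume j: "j \<in> {1..J}" and jB: "(int (n+1), int j) \<in> B"
      have "(int (n+1), int j) \<in> Uz" using colnU[of "int j"] j by (simp add: add.commute)
      then show False using jB BW UW by blast
    qed
    have b0: "\<forall>j\<in>{1..J}. phiX B 1 0 j (cL j) = cR j"
    proof
      fix j assume j: "j \<in> {1..J}"
      show "phiX B 1 0 j (cL j) = cR j"
      proof (cases "l < j")
        case False
        have "(RR Wz)\<^sup>*\<^sup>* (0, 1) (0, int j)"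
          by (rule RR_col') (use j False col0W in auto)
        then have "(0, int j) \<in> B" unfolding B_def by blast
        then show ?thesis using False by (simp add: phiX_def cL_def cR_def)
      next
        case True
        then have "(0, int j) \<in> Uz" using col0U j by auto
        then have "(0, int j) \<notin> B" using BW UW by blast
        then show ?thesis using True by (simp add: phiX_def cL_def cR_def)
      qed
    qed
    have Bbd: "\<forall>p\<in>B. \<forall>q. adjz p q \<and> q \<notin> B \<and> ingrid q \<longrightarrow> (?E p - 1) * (?E q - 1) \<le> 0"
    proof (rule Xbd_gen[of B Wz 1 "-1"])
      show "B \<subseteq> Wz" by (rule BW)
      show "\<And>p q. p \<in> B \<Longrightarrow> RR Wz p q \<Longrightarrow> q \<in> B" using Bclos r_into_rtranclp by metis
      show "Wz = {p. ingrid p \<and> (?E p - 1) * (-1) \<ge> 1}" unfolding Wz_def by auto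
    qed simp
    have Bgrid: "\<forall>p\<in>B. ingrid p" using BW unfolding Wz_def by blast
    obtain S' T' where h: "S' \<in> C" "T' \<in> C" "Psi S' T' = Psi S T" "cost (Ec cR S' T') \<le> cost (Ec cL S T)"
      using region_exchange[OF S T _ Bgrid XJ _ b0] Bbd Xn unfolding Ez_def by fastforce
    have "4 * fL S T \<le> 4 * fR S' T'"
      using FL[OF S T] FR[OF h(1,2)] h(3,4) unfolding fR_def fL_def by linarith
    then show ?thesis using h by auto
  qed
qed

end

lemma sub_add_mset_cases:
  assumes "N \<subseteq># add_mset x M"
  shows "N \<subseteq># M \<or> (\<exists>N'. N' \<subseteq># M \<and> N = add_mset x N')"
proof (cases "x \<in># N")
  case True
  then have "N = add_mset x (N - {#x#})" by simp
  moreover have "N - {#x#} \<subseteq># M"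
  proof -
    have "count (N - {#x#}) y \<le> count M y" for y
      using mset_subset_eq_count[OF assms, of y] by (cases "y = x") auto
    then show ?thesis by (simp add: subseteq_mset_def)
  qed
  ultimately show ?thesis by blast
next
  case False
  have "count N y \<le> count M y" for y
  proof (cases "y = x")
    case True
    have "count N x = 0" using False by (simp add: not_in_iff)
    then show ?thesis using True by simp
  next
    case False then show ?thesis using mset_subset_eq_count[OF assms, of y] by simp
  qed
  then show ?thesis by (simp add: subseteq_mset_def)
qed

lemma finite_submsets: "finite {N. N \<subseteq># (M :: 'a multiset)}"
proof (induction M)
  case empty
  then show ?case by simp
next
  case (add x M)
  have "{N. N \<subseteq># add_mset x M} \<subseteq> {N. N \<subseteq># M} \<union> add_mset x ` {N. N \<subseteq># M}"
  proof
    fix N assume "N \<in> {N. N \<subseteq># add_mset x M}"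
    then have "N \<subseteq># add_mset x M" by simp
    from sub_add_mset_cases[OF this]
    show "N \<in> {N. N \<subseteq># M} \<union> add_mset x ` {N. N \<subseteq># M}" by auto
  qed
  moreover have "finite ({N. N \<subseteq># M} \<union> add_mset x ` {N. N \<subseteq># M})" using add by simp
  ultimately show ?case by (rule finite_subset)
qed

lemma finite_choices: "finite (choices n cfg)"
proof -
  have "choices n cfg \<subseteq> (\<lambda>f a. if a \<in> {1..n} then f a else {#}) ` (\<Pi>\<^sub>E a \<in> {1..n}. {N. N \<subseteq># cfg a})"
  proof
    fix S assume S: "S \<in> choices n cfg"
    have "S = (\<lambda>a. if a \<in> {1..n} then restrict S {1..n} a else {#})"
    proof
      fix a show "S a = (if a \<in> {1..n} then restrict S {1..n} a else {#})"
      proof (cases "a \<in> {1..n}")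
        case True then show ?thesis by simp
      next
        case False
        have "S a = {#}" using S False unfolding choices_def by blast
        then show ?thesis by (simp only: if_not_P[OF False])
      qed
    qed
    moreover have "restrict S {1..n} \<in> (\<Pi>\<^sub>E a \<in> {1..n}. {N. N \<subseteq># cfg a})"
      using S unfolding choices_def by (simp add: restrict_PiE_iff)
    ultimately show "S \<in> (\<lambda>f a. if a \<in> {1..n} then f a else {#}) ` (\<Pi>\<^sub>E a \<in> {1..n}. {N. N \<subseteq># cfg a})"
      by blast
  qed
  moreover have "finite ((\<lambda>f a. if a \<in> {1..n} then f a else {#}) ` (\<Pi>\<^sub>E a \<in> {1..n}. {N. N \<subseteq># cfg a}))"
    by (intro finite_imageI finite_PiE finite_submsets) simp
  ultimately show ?thesis by (rule finite_subset)
qed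

lemma choices_ne: "(\<lambda>a. {#}) \<in> choices n cfg"
  by (simp add: choices_def)

lemma max_identity:
  fixes f g h1 h2 h3 h4 :: "'s \<Rightarrow> int" and c :: int
  assumes fin: "finite C" and ne: "x0 \<in> C"
    and I: "\<forall>S\<in>C. \<forall>T\<in>C. \<exists>S'\<in>C. \<exists>T'\<in>C. h1 S + h2 T \<le> f S' + g T'"
    and II: "\<forall>S\<in>C. \<forall>T\<in>C. \<exists>S'\<in>C. \<exists>T'\<in>C. h3 S + h4 T - c \<le> f S' + g T'"
    and III: "\<forall>S\<in>C. \<forall>T\<in>C. \<exists>S'\<in>C. \<exists>T'\<in>C. f S + g T \<le> h1 S' + h2 T' \<or> f S + g T \<le> h3 S' + h4 T' - c"
  shows "Max (f ` C) + Max (g ` C) = max (Max (h1 ` C) + Max (h2 ` C)) (Max (h3 ` C) + Max (h4 ` C) - c)"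
proof -
  have ex: "\<exists>S\<in>C. F S = Max (F ` C)" for F :: "'s \<Rightarrow> int"
  proof -
    have "Max (F ` C) \<in> F ` C" using fin ne by (intro Max_in) auto
    then show ?thesis by force
  qed
  have ge: "F S \<le> Max (F ` C)" if "S \<in> C" for F :: "'s \<Rightarrow> int" and S
    using fin that by (intro Max_ge) auto
  obtain S1 where S1: "S1 \<in> C" "h1 S1 = Max (h1 ` C)" using ex by blast
  obtain S2 where S2: "S2 \<in> C" "h2 S2 = Max (h2 ` C)" using ex by blast
  obtain S3 where S3: "S3 \<in> C" "h3 S3 = Max (h3 ` C)" using ex by blast
  obtain S4 where S4: "S4 \<in> C" "h4 S4 = Max (h4 ` C)" using ex by blast
  obtain Sf where Sf: "Sf \<in> C" "f Sf = Max (f ` C)" using ex by blast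
  obtain Sg where Sg: "Sg \<in> C" "g Sg = Max (g ` C)" using ex by blast
  have a: "Max (h1 ` C) + Max (h2 ` C) \<le> Max (f ` C) + Max (g ` C)"
  proof -
    obtain S' T' where "S' \<in> C" "T' \<in> C" "h1 S1 + h2 S2 \<le> f S' + g T'" using I S1(1) S2(1) by blast
    then show ?thesis using S1 S2 ge[of S' f] ge[of T' g] by linarith
  qed
  have b: "Max (h3 ` C) + Max (h4 ` C) - c \<le> Max (f ` C) + Max (g ` C)"
  proof -
    obtain S' T' where "S' \<in> C" "T' \<in> C" "h3 S3 + h4 S4 - c \<le> f S' + g T'" using II S3(1) S4(1) by blast
    then show ?thesis using S3 S4 ge[of S' f] ge[of T' g] by linarith
  qed
  have c: "Max (f ` C) + Max (g ` C) \<le> max (Max (h1 ` C) + Max (h2 ` C)) (Max (h3 ` C) + Max (h4 ` C) - c)"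
  proof -
    obtain S' T' where h: "S' \<in> C" "T' \<in> C" "f Sf + g Sg \<le> h1 S' + h2 T' \<or> f Sf + g Sg \<le> h3 S' + h4 T' - c"
      using III Sf(1) Sg(1) by blast
    then show ?thesis using Sf Sg ge[of S' h1] ge[of T' h2] ge[of S' h3] ge[of T' h4] by linarith
  qed
  show ?thesis using a b c by linarith
qed


definition bfun :: "nat \<times> int \<Rightarrow> nat \<times> int" where "bfun p = (fst p, snd p + int (fst p))"
definition bfun' :: "nat \<times> int \<Rightarrow> nat \<times> int" where "bfun' p = (fst p, snd p - int (fst p))"
definition bmap :: "(nat \<Rightarrow> (nat \<times> int) multiset) \<Rightarrow> nat \<Rightarrow> (nat \<times> int) multiset" where
  "bmap S = S(1 := image_mset bfun (S 1))"

lemma bfun_eq: "bfun = (\<lambda>(m, r). (m, r + int m))"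
  by (rule ext) (simp add: bfun_def case_prod_beta')

lemma bar_cfg_eq: "bar_cfg cfg = bmap cfg"
proof
  fix a show "bar_cfg cfg a = bmap cfg a"
    by (simp add: bar_cfg_def bmap_def bfun_eq)
qed

lemma bfun_inv[simp]: "bfun (bfun' p) = p" "bfun' (bfun p) = p"
  by (simp_all add: bfun_def bfun'_def)

lemma fst_bfun[simp]: "fst (bfun p) = fst p"
  by (simp add: bfun_def)

lemma image_fst_bfun: "image_mset fst (image_mset bfun M) = image_mset fst M"
  by (simp add: image_mset.compositionality o_def)

lemma snd_bfun_sum: "sum_mset (image_mset snd (image_mset bfun M)) = sum_mset (image_mset snd M) + int (sum_mset (image_mset fst M))"
  by (induction M) (auto simp: bfun_def)

lemma choices_bar:
  assumes n1: "1 \<le> n"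
  shows "choices n (bar_cfg cfg) = bmap ` choices n cfg"
proof
  show "bmap ` choices n cfg \<subseteq> choices n (bar_cfg cfg)"
  proof
    fix S' assume "S' \<in> bmap ` choices n cfg"
    then obtain S where S: "S \<in> choices n cfg" "S' = bmap S" by blast
    show "S' \<in> choices n (bar_cfg cfg)"
      unfolding choices_def
    proof (intro CollectI conjI ballI allI impI)
      fix a assume a: "a \<in> {1..n}"
      have "S a \<subseteq># cfg a" using S a by (simp add: choices_def)
      then show "S' a \<subseteq># bar_cfg cfg a"
        using S(2) unfolding bar_cfg_eq bmap_def by (auto intro: image_mset_subseteq_mono)
    next
      fix a :: nat assume a: "a \<notin> {1..n}"
      then have "a \<noteq> 1" using n1 by auto
      then show "S' a = {#}" using S a unfolding bmap_def choices_def by auto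
    qed
  qed
next
  show "choices n (bar_cfg cfg) \<subseteq> bmap ` choices n cfg"
  proof
    fix S' assume S': "S' \<in> choices n (bar_cfg cfg)"
    define S where "S = S'(1 := image_mset bfun' (S' 1))"
    have "bmap S = S'"
      unfolding bmap_def S_def by (auto simp: image_mset.compositionality o_def)
    moreover have "S \<in> choices n cfg"
      unfolding choices_def
    proof (intro CollectI conjI ballI allI impI)
      fix a assume a: "a \<in> {1..n}"
      have h: "S' a \<subseteq># bar_cfg cfg a" using S' a by (simp add: choices_def)
      show "S a \<subseteq># cfg a"
      proof (cases "a = 1")
        case True
        have "image_mset bfun' (S' 1) \<subseteq># image_mset bfun' (image_mset bfun (cfg 1))"
          using h True unfolding bar_cfg_eq bmap_def by (auto intro: image_mset_subseteq_mono)
        then show ?thesis using True by (simp add: S_def image_mset.compositionality o_def)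
      next
        case False
        then show ?thesis using h by (simp add: S_def bar_cfg_def)
      qed
    next
      fix a :: nat assume a: "a \<notin> {1..n}"
      then have "a \<noteq> 1" using n1 by auto
      then show "S a = {#}" using S' a unfolding S_def choices_def by auto
    qed
    ultimately show "S' \<in> bmap ` choices n cfg" by blast
  qed
qed

lemma tau_obj_bmap:
  assumes n1: "1 \<le> n"
  shows "tau_obj n lam (bmap S) dd = tau_obj n lam S dd - int (sum_mset (image_mset fst (S 1)))"
proof -
  have nu: "image_mset fst (bmap S a) = image_mset fst (S a)" for a
    by (simp add: bmap_def image_fst_bfun)
  have "(\<Sum>a=1..n. sum_mset (image_mset snd (bmap S a)))
      = (\<Sum>a=1..n. sum_mset (image_mset snd (S a)) + (if a = 1 then int (sum_mset (image_mset fst (S 1))) else 0))"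
    by (intro sum.cong refl) (simp add: bmap_def snd_bfun_sum)
  also have "\<dots> = (\<Sum>a=1..n. sum_mset (image_mset snd (S a))) + int (sum_mset (image_mset fst (S 1)))"
    using n1 by (simp add: sum.distrib)
  finally have s: "(\<Sum>a=1..n. sum_mset (image_mset snd (bmap S a))) = (\<Sum>a=1..n. sum_mset (image_mset snd (S a))) + int (sum_mset (image_mset fst (S 1)))" .
  show ?thesis unfolding tau_obj_def Let_def nu s by simp
qed

lemma tau_obj_lam_add:
  "tau_obj n (lam + {#x#}) S dd = tau_obj n lam S dd + (\<Sum>p\<in>#S 1. int (min x (fst p)))"
proof -
  have "minm (lam + {#x#}) (image_mset fst (S 1)) = minm lam (image_mset fst (S 1)) + (\<Sum>p\<in>#S 1. int (min x (fst p)))"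
    by (simp add: minm_def image_mset.compositionality o_def)
  then show ?thesis unfolding tau_obj_def Let_def by simp
qed

lemma tau_obj_split:
  "tau_obj n lam S dd = tau_obj n lam S (n+1) - (if 1 \<le> dd \<and> dd \<le> n then int (sum_mset (image_mset fst (S dd))) else 0)"
  unfolding tau_obj_def Let_def by simp

context rc
begin

lemma obj_eq: "1 \<le> dd \<Longrightarrow> tau_obj n lam S dd = Q S - Nd S dd"
  unfolding Q_def Nd_def by (subst tau_obj_split) simp

lemma tau_eq: "1 \<le> dd \<Longrightarrow> tau n cfg lam dd = Max ((\<lambda>S. Q S - Nd S dd) ` C)"
  unfolding tau_def using obj_eq by simp

lemma obj_k: "1 \<le> dd \<Longrightarrow> tau_obj n (add_mset l lam) S dd = Q S + Gf S - Nd S dd"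
proof -
  assume dd: "1 \<le> dd"
  have "tau_obj n (lam + {#l#}) S dd = tau_obj n lam S dd + Gf S"
    unfolding Gf_def by (rule tau_obj_lam_add)
  then show ?thesis using obj_eq[OF dd, of S] by simp
qed

lemma obj_bar_k: "1 \<le> dd \<Longrightarrow> tau_obj n (add_mset l lam) (bmap S) dd = Q S + Gf S - Nd S dd - Nd S 1"
proof -
  assume dd: "1 \<le> dd"
  have "tau_obj n (add_mset l lam) (bmap S) dd = tau_obj n (add_mset l lam) S dd - int (sum_mset (image_mset fst (S 1)))"
    by (rule tau_obj_bmap[OF n1])
  moreover have "Nd S 1 = int (sum_mset (image_mset fst (S 1)))" using n1 by (simp add: Nd_def)
  ultimately show ?thesis using obj_k[OF dd, of S] by simp
qed

lemma obj_bar: "1 \<le> dd \<Longrightarrow> tau_obj n lam (bmap S) dd = Q S - Nd S dd - Nd S 1"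
proof -
  assume dd: "1 \<le> dd"
  have "tau_obj n lam (bmap S) dd = tau_obj n lam S dd - int (sum_mset (image_mset fst (S 1)))"
    by (rule tau_obj_bmap[OF n1])
  moreover have "Nd S 1 = int (sum_mset (image_mset fst (S 1)))" using n1 by (simp add: Nd_def)
  ultimately show ?thesis using obj_eq[OF dd, of S] by simp
qed

lemma tau_eq_k: "1 \<le> dd \<Longrightarrow> tau n cfg (lam + {#l#}) dd = Max ((\<lambda>S. Q S + Gf S - Nd S dd) ` C)"
  unfolding tau_def using obj_k by simp

lemma tau_eq_bar: "1 \<le> dd \<Longrightarrow> tau n (bar_cfg cfg) lam dd = Max ((\<lambda>S. Q S - Nd S dd - Nd S 1) ` C)"
proof -
  assume dd: "1 \<le> dd"
  have "tau n (bar_cfg cfg) lam dd = Max ((\<lambda>S. tau_obj n lam S dd) ` (bmap ` C))"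
    unfolding tau_def using dd choices_bar[OF n1] by simp
  also have "\<dots> = Max ((\<lambda>S. tau_obj n lam (bmap S) dd) ` C)" by (simp add: image_image)
  also have "\<dots> = Max ((\<lambda>S. Q S - Nd S dd - Nd S 1) ` C)"
    using dd by (simp only: obj_bar)
  finally show ?thesis .
qed

lemma tau_eq_bar_k: "1 \<le> dd \<Longrightarrow> tau n (bar_cfg cfg) (lam + {#l#}) dd = Max ((\<lambda>S. Q S + Gf S - Nd S dd - Nd S 1) ` C)"
proof -
  assume dd: "1 \<le> dd"
  have "tau n (bar_cfg cfg) (lam + {#l#}) dd = Max ((\<lambda>S. tau_obj n (lam + {#l#}) S dd) ` (bmap ` C))"
    unfolding tau_def using dd choices_bar[OF n1] by simp
  also have "\<dots> = Max ((\<lambda>S. tau_obj n (lam + {#l#}) (bmap S) dd) ` C)" by (simp add: image_image)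
  also have "\<dots> = Max ((\<lambda>S. Q S + Gf S - Nd S dd - Nd S 1) ` C)"
    using dd by (simp add: obj_bar_k)
  finally show ?thesis .
qed

lemma main_identity:
  "tau n cfg lam d + tau n (bar_cfg cfg) (lam + {#l#}) (d - 1)
   = max (tau n (bar_cfg cfg) (lam + {#l#}) d + tau n cfg lam (d - 1))
         (tau n cfg (lam + {#l#}) d + tau n (bar_cfg cfg) lam (d - 1) - int l)"
proof -
  have d1: "1 \<le> d - 1" "1 \<le> d" using d2 by auto
  have "Max ((\<lambda>S. Q S - Nd S d) ` C) + Max ((\<lambda>S. Q S + Gf S - Nd S (d-1) - Nd S 1) ` C)
      = max (Max ((\<lambda>S. Q S + Gf S - Nd S d - Nd S 1) ` C) + Max ((\<lambda>S. Q S - Nd S (d-1)) ` C))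
            (Max ((\<lambda>S. Q S + Gf S - Nd S d) ` C) + Max ((\<lambda>S. Q S - Nd S (d-1) - Nd S 1) ` C) - int l)"
  proof (rule max_identity[OF finite_choices choices_ne])
    show "\<forall>S\<in>C. \<forall>T\<in>C. \<exists>S'\<in>C. \<exists>T'\<in>C. (Q S + Gf S - Nd S d - Nd S 1) + (Q T - Nd T (d-1))
        \<le> (Q S' - Nd S' d) + (Q T' + Gf T' - Nd T' (d-1) - Nd T' 1)"
      using exchange_I unfolding fK_def fL_def by (fastforce simp: algebra_simps)
    show "\<forall>S\<in>C. \<forall>T\<in>C. \<exists>S'\<in>C. \<exists>T'\<in>C. (Q S + Gf S - Nd S d) + (Q T - Nd T (d-1) - Nd T 1) - int l
        \<le> (Q S' - Nd S' d) + (Q T' + Gf T' - Nd T' (d-1) - Nd T' 1)"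
      using exchange_II unfolding fR_def fL_def by (fastforce simp: algebra_simps)
    show "\<forall>S\<in>C. \<forall>T\<in>C. \<exists>S'\<in>C. \<exists>T'\<in>C. (Q S - Nd S d) + (Q T + Gf T - Nd T (d-1) - Nd T 1)
        \<le> (Q S' + Gf S' - Nd S' d - Nd S' 1) + (Q T' - Nd T' (d-1))
        \<or> (Q S - Nd S d) + (Q T + Gf T - Nd T (d-1) - Nd T 1)
        \<le> (Q S' + Gf S' - Nd S' d) + (Q T' - Nd T' (d-1) - Nd T' 1) - int l"
      using exchange_III unfolding fK_def fL_def fR_def by (fastforce simp: algebra_simps)
  qed
  then show ?thesis
    using d1 by (simp only: tau_eq tau_eq_k tau_eq_bar tau_eq_bar_k)
qed

end

lemma fst_le_sum: "(p :: nat \<times> int) \<in># M \<Longrightarrow> fst p \<le> sum_mset (image_mset fst M)"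
proof -
  assume "p \<in># M"
  then obtain M' where "M = add_mset p M'" by (metis multi_member_split)
  then have "sum_mset (image_mset fst M) = fst p + sum_mset (image_mset fst M')" by simp
  then show ?thesis by linarith
qed

theorem proposition5p1:
  fixes n :: nat and mu0 :: "nat list" and cfg :: "nat \<Rightarrow> (nat \<times> int) multiset"
    and k d :: nat
  assumes "1 \<le> n"
    and "rigged_config n mu0 cfg"
    and "1 \<le> k" and "k \<le> length mu0"
    and "2 \<le> d" and "d \<le> n + 1"
  shows "tauk n mu0 cfg (k - 1) d + tauk n mu0 (bar_cfg cfg) k (d - 1)
       = max (tauk n mu0 (bar_cfg cfg) k d + tauk n mu0 cfg (k - 1) (d - 1))
             (tauk n mu0 cfg k d + tauk n mu0 (bar_cfg cfg) (k - 1) (d - 1) - int (mu0 ! (k - 1)))"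
proof -
  define lam where "lam = mset (take (k - 1) mu0)"
  define l where "l = mu0 ! (k - 1)"
  define J where "J = l + 1 + (\<Sum>a=1..n. sum_mset (image_mset fst (cfg a)))"
  have pos: "\<forall>x\<in>set mu0. 0 < x" and lens0: "\<forall>a\<in>{1..n}. \<forall>p\<in>#cfg a. 0 < fst p"
    using assms(2) unfolding rigged_config_def by auto
  have kl: "k - 1 < length mu0" using assms(3,4) by simp
  have l1: "1 \<le> l" using pos nth_mem[OF kl] unfolding l_def by auto
  have lens: "\<forall>a\<in>{1..n}. \<forall>p\<in>#cfg a. 0 < fst p \<and> fst p < J"
  proof (intro ballI conjI)
    fix a p assume a: "a \<in> {1..n}" and p: "p \<in># cfg a"
    show "0 < fst p" using lens0 a p by blast
    have "fst p \<le> sum_mset (image_mset fst (cfg a))" using fst_le_sum[OF p] .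
    also have "\<dots> \<le> (\<Sum>a=1..n. sum_mset (image_mset fst (cfg a)))"
      using a by (intro member_le_sum) auto
    finally show "fst p < J" unfolding J_def by simp
  qed
  interpret rc n d cfg lam l J
    by unfold_locales (use assms l1 lens in \<open>auto simp: J_def\<close>)
  have tk: "mset (take k mu0) = lam + {#l#}"
  proof -
    have "take k mu0 = take (Suc (k - 1)) mu0" using assms(3) by simp
    also have "\<dots> = take (k - 1) mu0 @ [mu0 ! (k - 1)]" by (rule take_Suc_conv_app_nth[OF kl])
    finally show ?thesis unfolding lam_def l_def by simp
  qed
  show ?thesis
    unfolding tauk_def tk lam_def[symmetric] l_def[symmetric] by (rule main_identity)
qed

end
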